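(* Consider the $M_t^{B_t}/M/\infty$ queue described in the context, in which every customer's amount of work is exponentially distributed with rate $\mu>0$. Then for all $t,\delta\ge0$, $$\mathrm{Cov}(Q(t),Q(t+\delta))=\mathrm{Var}(Q(t))\,e^{-\mu\delta}.$$
   Context: Model: batches of customers arrive at the points of a non-homogeneous Poisson process $\{A(t);t\ge0\}$ on $[0,\infty)$ with rate function $\lambda:[0,\infty)\to[0,\infty)$; the batch arriving at time $s$ has a random positive-integer size $B_s$ (law may depend on $s$), batch sizes being independent of each other and of the arrival process. Each customer brings an amount of work that is exponentially distributed with rate $\mu$, independently of everything else. There are infinitely many servers, so a customer arriving at time $s$ with work $S$ departs at time $s+S$. $Q(0)=0$, and $Q(t)$ is the number of customers in the system at time $t$. *)

theory Defs
  imports "HOL-Probability.Probability"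
begin

definition int_rate :: "(real \<Rightarrow> real) \<Rightarrow> real \<Rightarrow> real \<Rightarrow> real" where
  "int_rate lam s t = (LINT u:{s..t}|lborel. lam u)"

definition nh_poisson_process ::
    "'a measure \<Rightarrow> (real \<Rightarrow> real) \<Rightarrow> (real \<Rightarrow> 'a \<Rightarrow> nat) \<Rightarrow> bool" where
  "nh_poisson_process M lam A \<longleftrightarrow>
     prob_space M \<and>
     (\<forall>u. 0 \<le> lam u) \<and> lam \<in> borel_measurable borel \<and>
     (\<forall>t\<ge>0. set_integrable lborel {0..t} lam) \<and>
     (\<forall>t\<ge>0. A t \<in> measurable M (count_space UNIV)) \<and>
     (\<forall>\<omega>\<in>space M. A 0 \<omega> = 0 \<and> mono_on {0..} (\<lambda>t. A t \<omega>) \<and>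
        (\<forall>t\<ge>0. continuous (at_right t) (\<lambda>s. real (A s \<omega>)))) \<and>
     (\<forall>s t n. 0 \<le> s \<longrightarrow> s \<le> t \<longrightarrow>
        measure M {\<omega>\<in>space M. A t \<omega> - A s \<omega> = n}
          = int_rate lam s t ^ n / fact n * exp (- int_rate lam s t)) \<and>
     (\<forall>(tt::nat \<Rightarrow> real) n. 0 \<le> tt 0 \<longrightarrow> mono tt \<longrightarrow>
        prob_space.indep_vars M (\<lambda>_. count_space UNIV)
          (\<lambda>i \<omega>. A (tt (Suc i)) \<omega> - A (tt i) \<omega>) {..<n})"

definition arrival_time :: "(real \<Rightarrow> 'a \<Rightarrow> nat) \<Rightarrow> nat \<Rightarrow> 'a \<Rightarrow> real" where
  "arrival_time A k \<omega> = Inf {t. 0 \<le> t \<and> k \<le> A t \<omega>}"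

definition arrival_events :: "'a measure \<Rightarrow> (real \<Rightarrow> 'a \<Rightarrow> nat) \<Rightarrow> 'a set set" where
  "arrival_events M A =
     sigma_sets (space M) {A t -` {n} \<inter> space M | t n. 0 \<le> t}"

definition arrival_batch_events ::
    "'a measure \<Rightarrow> (real \<Rightarrow> 'a \<Rightarrow> nat) \<Rightarrow> (nat \<Rightarrow> 'a \<Rightarrow> nat) \<Rightarrow> 'a set set" where
  "arrival_batch_events M A B =
     sigma_sets (space M) ({A t -` {n} \<inter> space M | t n. 0 \<le> t} \<union>
                           {B k -` {b} \<inter> space M | k b. 1 \<le> k})"

datatype src_index = ArrBatch | Work nat nat

(*
  The M_t^{B_t}/M/oo model.
  - A: non-homogeneous Poisson arrival process with rate lam;
  - B k: size of the k-th batch (k \<ge> 1); conditionally on the arrival process the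
    batch sizes are independent and the k-th one has law beta (arrival epoch of batch k);
  - S k j: work of the j-th customer of the k-th batch, i.i.d. Exp(mu), independent of
    the arrival process and the batch sizes.
*)
definition batch_model ::
    "'a measure \<Rightarrow> (real \<Rightarrow> real) \<Rightarrow> (real \<Rightarrow> nat pmf) \<Rightarrow> real \<Rightarrow>
     (real \<Rightarrow> 'a \<Rightarrow> nat) \<Rightarrow> (nat \<Rightarrow> 'a \<Rightarrow> nat) \<Rightarrow> (nat \<Rightarrow> nat \<Rightarrow> 'a \<Rightarrow> real) \<Rightarrow> bool" where
  "batch_model M lam beta mu A B S \<longleftrightarrow>
     nh_poisson_process M lam A \<and>
     0 < mu \<and>
     (\<forall>s\<ge>0. pmf (beta s) 0 = 0) \<and>
     (\<forall>b. (\<lambda>s. pmf (beta s) b) \<in> borel_measurable borel) \<and>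
     (\<forall>k\<ge>1. B k \<in> measurable M (count_space UNIV)) \<and>
     (\<forall>(n::nat) (b::nat \<Rightarrow> nat) E. E \<in> arrival_events M A \<longrightarrow>
        E \<subseteq> {\<omega>\<in>space M. \<exists>t\<ge>0. n \<le> A t \<omega>} \<longrightarrow>
        measure M (E \<inter> {\<omega>\<in>space M. \<forall>k\<in>{1..n}. B k \<omega> = b k})
          = (LINT \<omega>:E|M. (\<Prod>k\<in>{1..n}. pmf (beta (arrival_time A k \<omega>)) (b k)))) \<and>
     (\<forall>k\<ge>1. \<forall>j\<ge>1. distributed M lborel (S k j) (\<lambda>x. ennreal (exponential_density mu x))) \<and>
     prob_space.indep_sets M
        (\<lambda>i. case i of ArrBatch \<Rightarrow> arrival_batch_events M A B
                     | Work k j \<Rightarrow> {S k j -` X \<inter> space M | X. X \<in> sets borel})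
        ({ArrBatch} \<union> {Work k j | k j. 1 \<le> k \<and> 1 \<le> j})"

(* Number of customers in the system at time t: customer j of batch k is present at
   time t iff it has arrived by t (k \<le> A t) and has not yet departed
   (t < arrival epoch + work). *)
definition queue_length ::
    "(real \<Rightarrow> 'a \<Rightarrow> nat) \<Rightarrow> (nat \<Rightarrow> 'a \<Rightarrow> nat) \<Rightarrow> (nat \<Rightarrow> nat \<Rightarrow> 'a \<Rightarrow> real) \<Rightarrow> real \<Rightarrow> 'a \<Rightarrow> nat" where
  "queue_length A B S t \<omega> =
     (\<Sum>k\<in>{1..A t \<omega>}. card {j\<in>{1..B k \<omega>}. t < arrival_time A k \<omega> + S k j \<omega>})"

definition variance_of :: "'a measure \<Rightarrow> ('a \<Rightarrow> real) \<Rightarrow> real" where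
  "variance_of M X = (LINT \<omega>|M. (X \<omega> - (LINT \<eta>|M. X \<eta>))\<^sup>2)"

definition covariance_of :: "'a measure \<Rightarrow> ('a \<Rightarrow> real) \<Rightarrow> ('a \<Rightarrow> real) \<Rightarrow> real" where
  "covariance_of M X Y =
     (LINT \<omega>|M. (X \<omega> - (LINT \<eta>|M. X \<eta>)) * (Y \<omega> - (LINT \<eta>|M. Y \<eta>)))"

end

theory Submission
  imports Defs
begin

lemma nat_close_eq: "\<bar>real (a::nat) - real b\<bar> * 2 < 1 \<Longrightarrow> a = b"
proof -
  assume h: "\<bar>real (a::nat) - real b\<bar> * 2 < 1"
  have "real_of_int \<bar>int a - int b\<bar> < real_of_int 1" using h by simp
  then have "\<bar>int a - int b\<bar> < 1" by (simp only: of_int_less_iff)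
  then show ?thesis by simp
qed

locale qm =
  fixes M :: "'a measure" and lam :: "real \<Rightarrow> real" and beta :: "real \<Rightarrow> nat pmf"
    and mu :: real and A :: "real \<Rightarrow> 'a \<Rightarrow> nat" and B :: "nat \<Rightarrow> 'a \<Rightarrow> nat"
    and S :: "nat \<Rightarrow> nat \<Rightarrow> 'a \<Rightarrow> real"
  assumes model: "batch_model M lam beta mu A B S"
begin

lemma PP: "nh_poisson_process M lam A" using model unfolding batch_model_def by blast

sublocale prob_space M using PP unfolding nh_poisson_process_def by blast

lemma mu_pos: "0 < mu" using model unfolding batch_model_def by blast

lemma A_meas: "0 \<le> t \<Longrightarrow> A t \<in> measurable M (count_space UNIV)"
  using PP unfolding nh_poisson_process_def by blast

lemma A_0: "\<omega> \<in> space M \<Longrightarrow> A 0 \<omega> = 0"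
  using PP unfolding nh_poisson_process_def by blast

lemma A_mono: "\<omega> \<in> space M \<Longrightarrow> 0 \<le> s \<Longrightarrow> s \<le> t \<Longrightarrow> A s \<omega> \<le> A t \<omega>"
  using PP unfolding nh_poisson_process_def mono_on_def by auto

lemma A_rcont: "\<omega> \<in> space M \<Longrightarrow> 0 \<le> t \<Longrightarrow> continuous (at_right t) (\<lambda>s. real (A s \<omega>))"
  using PP unfolding nh_poisson_process_def by blast

lemma B_meas: "1 \<le> k \<Longrightarrow> B k \<in> measurable M (count_space UNIV)"
  using model unfolding batch_model_def by blast

lemma S_distr: "1 \<le> k \<Longrightarrow> 1 \<le> j \<Longrightarrow>
    distributed M lborel (S k j) (\<lambda>x. ennreal (exponential_density mu x))"
  using model unfolding batch_model_def by blast

lemma S_meas: "1 \<le> k \<Longrightarrow> 1 \<le> j \<Longrightarrow> S k j \<in> borel_measurable M"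
  using distributed_measurable[OF S_distr] by simp

definition II :: "src_index set" where
  "II = {ArrBatch} \<union> {Work k j | k j. 1 \<le> k \<and> 1 \<le> j}"

definition FF :: "src_index \<Rightarrow> 'a set set" where
  "FF i = (case i of ArrBatch \<Rightarrow> arrival_batch_events M A B
                     | Work k j \<Rightarrow> {S k j -` X \<inter> space M | X. X \<in> sets borel})"

lemma indep_FF: "indep_sets FF II"
  using model unfolding batch_model_def FF_def II_def by blast

lemma tau_le_iff:
  assumes w: "\<omega> \<in> space M" and s: "0 \<le> s" "k \<le> A s \<omega>"
  shows "arrival_time A k \<omega> \<le> x \<longleftrightarrow> 0 \<le> x \<and> k \<le> A x \<omega>"
proof -
  define T where "T = {t. 0 \<le> t \<and> k \<le> A t \<omega>}"
  have sT: "s \<in> T" using s by (simp add: T_def)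
  have bdd: "bdd_below T" unfolding T_def by (rule bdd_belowI[of _ 0]) auto
  have ne: "T \<noteq> {}" using sT by blast
  define \<tau> where "\<tau> = Inf T"
  have tau_def': "arrival_time A k \<omega> = \<tau>" unfolding arrival_time_def \<tau>_def T_def ..
  have tau0: "0 \<le> \<tau>" unfolding \<tau>_def by (rule cInf_greatest[OF ne]) (auto simp: T_def)
  have kt: "k \<le> A \<tau> \<omega>"
  proof (rule ccontr)
    assume nk: "\<not> k \<le> A \<tau> \<omega>"
    have "((\<lambda>s. real (A s \<omega>)) \<longlongrightarrow> real (A \<tau> \<omega>)) (at_right \<tau>)"
      using A_rcont[OF w tau0] by (simp add: continuous_within)
    then have "eventually (\<lambda>s. dist (real (A s \<omega>)) (real (A \<tau> \<omega>)) < 1/2) (at_right \<tau>)"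
      by (rule tendstoD) simp
    then obtain b where b: "b > \<tau>" and bP: "\<And>y. y > \<tau> \<Longrightarrow> y < b \<Longrightarrow>
         dist (real (A y \<omega>)) (real (A \<tau> \<omega>)) < 1/2"
      unfolding eventually_at_right[of \<tau> "\<tau>+1", simplified] by blast
    have "Inf T < b" using b \<tau>_def by simp
    then obtain y where yT: "y \<in> T" and yb: "y < b"
      using cInf_less_iff[OF ne bdd] by blast
    have ytau: "\<tau> \<le> y" unfolding \<tau>_def by (rule cInf_lower[OF yT bdd])
    show False
    proof (cases "y = \<tau>")
      case True then show False using yT nk by (simp add: T_def)
    next
      case False
      then have "dist (real (A y \<omega>)) (real (A \<tau> \<omega>)) < 1/2" using bP ytau yb by simp
      then have "A y \<omega> = A \<tau> \<omega>" by (intro nat_close_eq) (simp add: dist_real_def)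
      then show False using yT nk by (simp add: T_def)
    qed
  qed
  show ?thesis
  proof
    assume "arrival_time A k \<omega> \<le> x"
    then have "\<tau> \<le> x" by (simp add: tau_def')
    then show "0 \<le> x \<and> k \<le> A x \<omega>"
      using tau0 kt A_mono[OF w tau0, of x] by auto
  next
    assume "0 \<le> x \<and> k \<le> A x \<omega>"
    then have "x \<in> T" by (simp add: T_def)
    then show "arrival_time A k \<omega> \<le> x" unfolding tau_def' \<tau>_def by (rule cInf_lower[OF _ bdd])
  qed
qed

lemma tau_le:
  assumes w: "\<omega> \<in> space M" and s: "0 \<le> s" "k \<le> A s \<omega>"
  shows "arrival_time A k \<omega> \<le> s" "0 \<le> arrival_time A k \<omega>"
  using tau_le_iff[OF assms, of s] s apply simp
  using tau_le_iff[OF assms, of "arrival_time A k \<omega>"] by simp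

end

lemma (in prob_space) indep_subalg_nn_integral:
  assumes N1: "space N1 = space M" "sets N1 \<subseteq> sets M"
    and N2: "space N2 = space M" "sets N2 \<subseteq> sets M"
    and ind: "indep_set (sets N1) (sets N2)"
    and h: "h \<in> borel_measurable (N1 \<Otimes>\<^sub>M N2)"
  shows "(\<integral>\<^sup>+\<omega>. h (\<omega>, \<omega>) \<partial>M) = (\<integral>\<^sup>+\<omega>1. (\<integral>\<^sup>+\<omega>2. h (\<omega>1, \<omega>2) \<partial>M) \<partial>M)"
proof -
  have rv1: "(\<lambda>x. x) \<in> measurable M N1" using N1 by (auto simp: measurable_def)
  have rv2: "(\<lambda>x. x) \<in> measurable M N2" using N2 by (auto simp: measurable_def)
  have e1: "{(\<lambda>x. x) -` A \<inter> space M | A. A \<in> sets N1} = sets N1"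
    using N1 sets.sets_into_space[of _ N1] by (auto; metis Int_absorb2)
  have e2: "{(\<lambda>x. x) -` A \<inter> space M | A. A \<in> sets N2} = sets N2"
    using N2 sets.sets_into_space[of _ N2] by (auto; metis Int_absorb2)
  have "indep_var N1 (\<lambda>x. x) N2 (\<lambda>x. x)"
    unfolding indep_var_eq using rv1 rv2 ind e1 e2 N1 N2
    by (simp add: sets.sigma_sets_eq[of N1, simplified N1] sets.sigma_sets_eq[of N2, simplified N2])
  then have eq: "distr M N1 (\<lambda>x. x) \<Otimes>\<^sub>M distr M N2 (\<lambda>x. x) = distr M (N1 \<Otimes>\<^sub>M N2) (\<lambda>x. (x, x))"
    unfolding indep_var_distribution_eq by simp
  interpret D1: prob_space "distr M N1 (\<lambda>x. x)" by (rule prob_space_distr[OF rv1])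
  interpret D2: prob_space "distr M N2 (\<lambda>x. x)" by (rule prob_space_distr[OF rv2])
  interpret D12: pair_sigma_finite "distr M N1 (\<lambda>x. x)" "distr M N2 (\<lambda>x. x)" ..
  have pm: "(\<lambda>x. (x, x)) \<in> measurable M (N1 \<Otimes>\<^sub>M N2)" using rv1 rv2 by (rule measurable_Pair)
  have h': "h \<in> borel_measurable (distr M N1 (\<lambda>x. x) \<Otimes>\<^sub>M distr M N2 (\<lambda>x. x))"
    using h by (simp cong: measurable_cong_sets)
  have "(\<integral>\<^sup>+\<omega>. h (\<omega>, \<omega>) \<partial>M) = integral\<^sup>N (distr M (N1 \<Otimes>\<^sub>M N2) (\<lambda>x. (x, x))) h"
    by (rule nn_integral_distr[OF pm, symmetric]) (simp add: h)
  also have "\<dots> = integral\<^sup>N (distr M N1 (\<lambda>x. x) \<Otimes>\<^sub>M distr M N2 (\<lambda>x. x)) h"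
    by (simp add: eq)
  also have "\<dots> = (\<integral>\<^sup>+ x. \<integral>\<^sup>+ y. h (x, y) \<partial>distr M N2 (\<lambda>x. x) \<partial>distr M N1 (\<lambda>x. x))"
    by (rule D2.nn_integral_fst[symmetric]) (rule h')
  also have "\<dots> = (\<integral>\<^sup>+ x. \<integral>\<^sup>+ y. h (x, y) \<partial>distr M N2 (\<lambda>x. x) \<partial>M)"
  proof (rule nn_integral_distr[OF rv1])
    have "(\<lambda>x. \<integral>\<^sup>+ y. h (x, y) \<partial>distr M N2 (\<lambda>x. x)) \<in> borel_measurable N1"
      by (rule D2.borel_measurable_nn_integral_fst) (use h in \<open>simp cong: measurable_cong_sets\<close>)
    then show "(\<lambda>x. \<integral>\<^sup>+ y. h (x, y) \<partial>distr M N2 (\<lambda>x. x)) \<in> borel_measurable (distr M N1 (\<lambda>x. x))"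
      by (simp cong: measurable_cong_sets)
  qed
  also have "\<dots> = (\<integral>\<^sup>+ x. \<integral>\<^sup>+ y. h (x, y) \<partial>M \<partial>M)"
  proof (rule nn_integral_cong)
    fix x assume x: "x \<in> space M"
    show "(\<integral>\<^sup>+ y. h (x, y) \<partial>distr M N2 (\<lambda>x. x)) = (\<integral>\<^sup>+ y. h (x, y) \<partial>M)"
    proof (rule nn_integral_distr[OF rv2])
      have "x \<in> space N1" using x N1 by simp
      then show "(\<lambda>y. h (x, y)) \<in> borel_measurable (distr M N2 (\<lambda>x. x))"
        using measurable_compose_Pair1[OF _ h] by (simp cong: measurable_cong_sets)
    qed
  qed
  finally show ?thesis .
qed

lemma meas_sub: "f \<in> measurable N X \<Longrightarrow> space N = space N' \<Longrightarrow> sets N \<subseteq> sets N' \<Longrightarrow> f \<in> measurable N' X"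
  by (auto simp: measurable_def)

definition surv :: "real \<Rightarrow> real \<Rightarrow> real" where
  "surv m c = (if 0 \<le> c then exp (- c * m) else 1)"

context qm
begin

definition GA where "GA = {A t -` {n} \<inter> space M | t n. 0 \<le> t}"
definition MA where "MA = sigma (space M) GA"
definition GAB where "GAB = GA \<union> {B k -` {b} \<inter> space M | k b. 1 \<le> k}"
definition MAB where "MAB = sigma (space M) GAB"
definition HH where "HH k j = sigma (space M) (\<Union>i \<in> II - {Work k j}. FF i)"
definition MS where "MS k j = sigma (space M) (FF (Work k j))"

lemma FF_sets: "i \<in> II \<Longrightarrow> FF i \<subseteq> sets M"
  using indep_FF unfolding indep_sets_def by blast

lemma GA_sub: "GA \<subseteq> Pow (space M)" unfolding GA_def by auto
lemma GAB_sub: "GAB \<subseteq> Pow (space M)" unfolding GAB_def GA_def by auto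
lemma FF_sub: "i \<in> II \<Longrightarrow> FF i \<subseteq> Pow (space M)" using FF_sets sets.sets_into_space by blast

lemma space_MA[simp]: "space MA = space M" unfolding MA_def by (simp add: space_measure_of_conv)
lemma space_MAB[simp]: "space MAB = space M" unfolding MAB_def by (simp add: space_measure_of_conv)
lemma space_HH[simp]: "space (HH k j) = space M" unfolding HH_def by (simp add: space_measure_of_conv)
lemma space_MS[simp]: "space (MS k j) = space M" unfolding MS_def by (simp add: space_measure_of_conv)

lemma sets_MA: "sets MA = sigma_sets (space M) GA"
  unfolding MA_def using GA_sub by simp
lemma sets_MAB: "sets MAB = sigma_sets (space M) GAB"
  unfolding MAB_def using GAB_sub by simp
lemma sets_MAB': "sets MAB = FF ArrBatch"
  unfolding sets_MAB FF_def arrival_batch_events_def GAB_def GA_def by simp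
lemma sets_HH: "sets (HH k j) = sigma_sets (space M) (\<Union>i \<in> II - {Work k j}. FF i)"
  unfolding HH_def using FF_sub by (subst sets_measure_of) auto
lemma sets_MS: "Work k j \<in> II \<Longrightarrow> sets (MS k j) = sigma_sets (space M) (FF (Work k j))"
  unfolding MS_def using FF_sub by (subst sets_measure_of) auto

lemma ArrBatch_II: "ArrBatch \<in> II" by (simp add: II_def)
lemma Work_II: "1 \<le> k \<Longrightarrow> 1 \<le> j \<Longrightarrow> Work k j \<in> II" by (simp add: II_def)

lemma sets_MAB_M: "sets MAB \<subseteq> sets M"
  using FF_sets[OF ArrBatch_II] sets_MAB' by simp

lemma sets_MA_MAB: "sets MA \<subseteq> sets MAB"
  unfolding sets_MA sets_MAB GAB_def by (rule sigma_sets_mono') auto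

lemma sets_MA_M: "sets MA \<subseteq> sets M" using sets_MA_MAB sets_MAB_M by blast

lemma sets_HH_M: "sets (HH k j) \<subseteq> sets M"
  unfolding sets_HH by (rule sets.sigma_sets_subset) (use FF_sets in blast)

lemma sets_MS_M: "Work k j \<in> II \<Longrightarrow> sets (MS k j) \<subseteq> sets M"
  unfolding sets_MS by (rule sets.sigma_sets_subset) (use FF_sets in blast)

lemma sets_MAB_HH: "sets MAB \<subseteq> sets (HH k j)"
  unfolding sets_MAB' sets_HH using ArrBatch_II by (auto intro: sigma_sets.Basic)

lemma indep_HS:
  assumes w: "Work k j \<in> II"
  shows "indep_set (sets (HH k j)) (sets (MS k j))"
proof -
  define I where "I = (\<lambda>b::bool. if b then II - {Work k j} else {Work k j})"
  have U: "(\<Union>b. I b) = II" using w by (auto simp: I_def split: if_splits)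
  have "indep_sets (\<lambda>b. sigma_sets (space M) (\<Union>i\<in>I b. FF i)) UNIV"
  proof (rule indep_sets_collect_sigma)
    show "indep_sets FF (\<Union>b\<in>UNIV. I b)" using U indep_FF by simp
  next
    fix i b assume "b \<in> (UNIV::bool set)" "i \<in> I b"
    then have iI: "i \<in> II" using w by (auto simp: I_def split: if_splits)
    show "Int_stable (FF i)"
    proof (cases i)
      case ArrBatch
      then show ?thesis unfolding ArrBatch sets_MAB'[symmetric] Int_stable_def by (auto intro: sets.Int)
    next
      case (Work k' j')
      show ?thesis unfolding Int_stable_def FF_def Work
      proof (clarsimp)
        fix X Y :: "real set" assume "X \<in> sets borel" "Y \<in> sets borel"
        then show "\<exists>Z. S k' j' -` X \<inter> space M \<inter> (S k' j' -` Y \<inter> space M) = S k' j' -` Z \<inter> space M \<and> Z \<in> sets borel"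
          by (intro exI[of _ "X \<inter> Y"]) auto
      qed
    qed
  next
    show "disjoint_family_on I UNIV" unfolding disjoint_family_on_def I_def by auto
  qed
  then show ?thesis unfolding indep_set_def sets_HH sets_MS[OF w]
    by (rule indep_sets_mono_sets) (auto simp: I_def split: bool.splits)
qed

lemma A_meas_MA: "0 \<le> t \<Longrightarrow> A t \<in> measurable MA (count_space UNIV)"
  unfolding measurable_count_space_eq2_countable sets_MA
  by (auto simp: GA_def intro!: sigma_sets.Basic)

lemma B_meas_MAB: "1 \<le> k \<Longrightarrow> B k \<in> measurable MAB (count_space UNIV)"
  unfolding measurable_count_space_eq2_countable sets_MAB
  by (auto simp: GAB_def intro!: sigma_sets.Basic)

lemma S_meas_HH: "1 \<le> k' \<Longrightarrow> 1 \<le> j' \<Longrightarrow> (k', j') \<noteq> (k, j) \<Longrightarrow> S k' j' \<in> borel_measurable (HH k j)"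
proof (rule measurableI)
  fix X :: "real set" assume "1 \<le> k'" "1 \<le> j'" "(k', j') \<noteq> (k, j)" "X \<in> sets borel"
  then show "S k' j' -` X \<inter> space (HH k j) \<in> sets (HH k j)"
    unfolding sets_HH by (intro sigma_sets.Basic UN_I[of "Work k' j'"]) (auto simp: II_def FF_def)
qed simp

lemma S_meas_MS: "Work k j \<in> II \<Longrightarrow> S k j \<in> borel_measurable (MS k j)"
  by (rule measurableI) (auto simp: sets_MS FF_def intro!: sigma_sets.Basic)

lemma reach_set:
  "{\<omega> \<in> space M. \<exists>s\<ge>0. k \<le> A s \<omega>} = (\<Union>m::nat. {\<omega> \<in> space M. k \<le> A (real m) \<omega>})"
proof (safe)
  fix \<omega> s assume w: "\<omega> \<in> space M" and s: "0 \<le> s" "k \<le> A s \<omega>"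
  obtain m :: nat where "s \<le> real m" using real_arch_simple by blast
  then show "\<omega> \<in> (\<Union>m::nat. {\<omega> \<in> space M. k \<le> A (real m) \<omega>})"
    using A_mono[OF w s(1), of "real m"] s w by (auto intro: le_trans)
next
  fix x m assume "x \<in> space M" "k \<le> A (real (m::nat)) x"
  then show "\<exists>s\<ge>0. k \<le> A s x" by (intro exI[of _ "real m"]) simp
qed

lemma reach_MA: "{\<omega> \<in> space M. \<exists>s\<ge>0. k \<le> A s \<omega>} \<in> sets MA"
proof -
  have "\<And>m::nat. {\<omega> \<in> space MA. k \<le> A (real m) \<omega>} \<in> sets MA"
  proof -
    fix m :: nat
    have "A (real m) -` {k..} \<inter> space MA \<in> sets MA" by (rule measurable_sets[OF A_meas_MA]) auto
    moreover have "A (real m) -` {k..} \<inter> space MA = {\<omega> \<in> space MA. k \<le> A (real m) \<omega>}" by auto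
    ultimately show "{\<omega> \<in> space MA. k \<le> A (real m) \<omega>} \<in> sets MA" by simp
  qed
  then show ?thesis unfolding reach_set by auto
qed

lemma tau_meas_MA: "arrival_time A k \<in> borel_measurable MA"
proof (rule borel_measurableI_le)
  fix y :: real
  define R where "R = {\<omega> \<in> space M. \<exists>s\<ge>0. k \<le> A s \<omega>}"
  have RM: "R \<in> sets MA" unfolding R_def by (rule reach_MA)
  have ky: "0 \<le> y \<Longrightarrow> {\<omega> \<in> space MA. k \<le> A y \<omega>} \<in> sets MA"
  proof -
    assume y: "0 \<le> y"
    have "A y -` {k..} \<inter> space MA \<in> sets MA" by (rule measurable_sets[OF A_meas_MA[OF y]]) auto
    moreover have "A y -` {k..} \<inter> space MA = {\<omega> \<in> space MA. k \<le> A y \<omega>}" by auto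
    ultimately show ?thesis by simp
  qed
  have "{\<omega> \<in> space MA. arrival_time A k \<omega> \<le> y} =
     (R \<inter> (if 0 \<le> y then {\<omega> \<in> space MA. k \<le> A y \<omega>} else {})) \<union>
     (if Inf ({}::real set) \<le> y then space M - R else {})"
  proof (rule set_eqI)
    fix \<omega>
    show "\<omega> \<in> {\<omega> \<in> space MA. arrival_time A k \<omega> \<le> y} \<longleftrightarrow> \<omega> \<in> (R \<inter> (if 0 \<le> y then {\<omega> \<in> space MA. k \<le> A y \<omega>} else {})) \<union>
       (if Inf ({}::real set) \<le> y then space M - R else {})"
    proof (cases "\<omega> \<in> space M")
      case False then show ?thesis by (auto simp: R_def)
    next
      case w: True
      show ?thesis
      proof (cases "\<omega> \<in> R")
        case True
        then obtain s where "0 \<le> s" "k \<le> A s \<omega>" by (auto simp: R_def)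
        then have "arrival_time A k \<omega> \<le> y \<longleftrightarrow> 0 \<le> y \<and> k \<le> A y \<omega>" using tau_le_iff w by blast
        then show ?thesis using True w by auto
      next
        case False
        then have e: "{t. 0 \<le> t \<and> k \<le> A t \<omega>} = {}" using w by (auto simp: R_def)
        have "arrival_time A k \<omega> = Inf ({}::real set)" unfolding arrival_time_def e by (rule refl)
        then show ?thesis using False w by auto
      qed
    qed
  qed
  also have "\<dots> \<in> sets MA"
  proof -
    have "space M - R \<in> sets MA" using sets.compl_sets[OF RM] by simp
    then show ?thesis using RM ky by (auto split: if_splits intro!: sets.Un sets.Int)
  qed
  finally show "{\<omega> \<in> space MA. arrival_time A k \<omega> \<le> y} \<in> sets MA" .
qed

lemma surv_exp:
  assumes w: "Work k j \<in> II"
    and W: "W \<in> borel_measurable (HH k j)" and a: "a \<in> borel_measurable (HH k j)"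
  shows "(\<integral>\<^sup>+\<omega>. W \<omega> * indicator {x. a \<omega> < x} (S k j \<omega>) \<partial>M) = (\<integral>\<^sup>+\<omega>. W \<omega> * ennreal (surv mu (a \<omega>)) \<partial>M)"
proof -
  have kj: "1 \<le> k" "1 \<le> j" using w by (auto simp: II_def)
  note D = S_distr[OF kj]
  have h: "(\<lambda>p. W (fst p) * indicator {x. a (fst p) < x} (S k j (snd p))) \<in> borel_measurable (HH k j \<Otimes>\<^sub>M MS k j)"
    using W a S_meas_MS[OF w] by measurable
  have "(\<integral>\<^sup>+\<omega>. W \<omega> * indicator {x. a \<omega> < x} (S k j \<omega>) \<partial>M) =
      (\<integral>\<^sup>+\<omega>1. (\<integral>\<^sup>+\<omega>2. W \<omega>1 * indicator {x. a \<omega>1 < x} (S k j \<omega>2) \<partial>M) \<partial>M)"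
    using indep_subalg_nn_integral[OF space_HH sets_HH_M space_MS sets_MS_M[OF w] indep_HS[OF w] h] by simp
  also have "\<dots> = (\<integral>\<^sup>+\<omega>1. W \<omega>1 * ennreal (surv mu (a \<omega>1)) \<partial>M)"
  proof (rule nn_integral_cong)
    fix \<omega>1 assume "\<omega>1 \<in> space M"
    have Sm: "{\<omega>2 \<in> space M. a \<omega>1 < S k j \<omega>2} \<in> sets M" using S_meas[OF kj] by measurable
    have "(\<integral>\<^sup>+\<omega>2. W \<omega>1 * indicator {x. a \<omega>1 < x} (S k j \<omega>2) \<partial>M) =
        (\<integral>\<^sup>+\<omega>2. W \<omega>1 * indicator {\<omega>2 \<in> space M. a \<omega>1 < S k j \<omega>2} \<omega>2 \<partial>M)"
      by (rule nn_integral_cong) (auto simp: indicator_def)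
    also have "\<dots> = W \<omega>1 * (\<integral>\<^sup>+\<omega>2. indicator {\<omega>2 \<in> space M. a \<omega>1 < S k j \<omega>2} \<omega>2 \<partial>M)"
      by (rule nn_integral_cmult) (rule borel_measurable_indicator[OF Sm])
    also have "\<dots> = W \<omega>1 * emeasure M {\<omega>2 \<in> space M. a \<omega>1 < S k j \<omega>2}"
      using Sm by simp
    also have "emeasure M {\<omega>2 \<in> space M. a \<omega>1 < S k j \<omega>2} = ennreal (surv mu (a \<omega>1))"
    proof (cases "0 \<le> a \<omega>1")
      case True
      then show ?thesis using exponential_distributedD_gt[OF D True mu_pos] S_meas[OF kj]
        by (simp add: surv_def emeasure_eq_measure mult.commute)
    next
      case False
      have "prob {\<omega>2 \<in> space M. 0 < S k j \<omega>2} \<le> prob {\<omega>2 \<in> space M. a \<omega>1 < S k j \<omega>2}"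
        using False S_meas[OF kj] by (intro finite_measure_mono) auto
      moreover have "prob {\<omega>2 \<in> space M. 0 < S k j \<omega>2} = 1"
        using exponential_distributedD_gt[OF D _ mu_pos, of 0] by simp
      ultimately have "prob {\<omega>2 \<in> space M. a \<omega>1 < S k j \<omega>2} = 1" using prob_le_1 by (metis antisym)
      then show ?thesis using False by (simp add: surv_def emeasure_eq_measure)
    qed
    finally show "(\<integral>\<^sup>+\<omega>2. W \<omega>1 * indicator {x. a \<omega>1 < x} (S k j \<omega>2) \<partial>M) = W \<omega>1 * ennreal (surv mu (a \<omega>1))" .
  qed
  finally show ?thesis .
qed

end

lemma nn_integral_prod_suminf2:
  fixes f g :: "nat \<Rightarrow> nat \<Rightarrow> 'a \<Rightarrow> ennreal"
  assumes f: "\<And>k j. f k j \<in> borel_measurable M" and g: "\<And>k j. g k j \<in> borel_measurable M"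
  shows "(\<integral>\<^sup>+\<omega>. (\<Sum>k. \<Sum>j. f k j \<omega>) * (\<Sum>k. \<Sum>j. g k j \<omega>) \<partial>M) =
         (\<Sum>k. \<Sum>j. \<Sum>k'. \<Sum>j'. \<integral>\<^sup>+\<omega>. f k j \<omega> * g k' j' \<omega> \<partial>M)"
proof -
  have "(\<integral>\<^sup>+\<omega>. (\<Sum>k. \<Sum>j. f k j \<omega>) * (\<Sum>k. \<Sum>j. g k j \<omega>) \<partial>M) =
        (\<integral>\<^sup>+\<omega>. (\<Sum>k. \<Sum>j. \<Sum>k'. \<Sum>j'. f k j \<omega> * g k' j' \<omega>) \<partial>M)"
  proof (rule nn_integral_cong)
    fix \<omega>
    let ?G = "(\<Sum>k. \<Sum>j. g k j \<omega>)"
    have "(\<Sum>k. \<Sum>j. f k j \<omega>) * ?G = (\<Sum>k. (\<Sum>j. f k j \<omega>) * ?G)" by (rule ennreal_suminf_multc[symmetric])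
    also have "\<dots> = (\<Sum>k. \<Sum>j. f k j \<omega> * ?G)" by (simp only: ennreal_suminf_multc)
    also have "\<dots> = (\<Sum>k. \<Sum>j. \<Sum>k'. \<Sum>j'. f k j \<omega> * g k' j' \<omega>)" by (simp only: ennreal_suminf_cmult)
    finally show "(\<Sum>k. \<Sum>j. f k j \<omega>) * ?G = (\<Sum>k. \<Sum>j. \<Sum>k'. \<Sum>j'. f k j \<omega> * g k' j' \<omega>)" .
  qed
  also have "\<dots> = (\<Sum>k. \<integral>\<^sup>+\<omega>. (\<Sum>j. \<Sum>k'. \<Sum>j'. f k j \<omega> * g k' j' \<omega>) \<partial>M)"
    by (rule nn_integral_suminf) (insert f g, measurable)
  also have "\<dots> = (\<Sum>k. \<Sum>j. \<integral>\<^sup>+\<omega>. (\<Sum>k'. \<Sum>j'. f k j \<omega> * g k' j' \<omega>) \<partial>M)"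
    by (intro arg_cong[where f=suminf] ext nn_integral_suminf) (insert f g, measurable)
  also have "\<dots> = (\<Sum>k. \<Sum>j. \<Sum>k'. \<integral>\<^sup>+\<omega>. (\<Sum>j'. f k j \<omega> * g k' j' \<omega>) \<partial>M)"
    by (intro arg_cong[where f=suminf] ext nn_integral_suminf) (insert f g, measurable)
  also have "\<dots> = (\<Sum>k. \<Sum>j. \<Sum>k'. \<Sum>j'. \<integral>\<^sup>+\<omega>. f k j \<omega> * g k' j' \<omega> \<partial>M)"
    by (intro arg_cong[where f=suminf] ext nn_integral_suminf) (insert f g, measurable)
  finally show ?thesis .
qed

context qm
begin

definition Ind :: "real \<Rightarrow> nat \<Rightarrow> nat \<Rightarrow> 'a \<Rightarrow> ennreal" where
  "Ind u k j \<omega> = (if 1 \<le> k \<and> k \<le> A u \<omega> \<and> 1 \<le> j \<and> j \<le> B k \<omega> \<and> u < arrival_time A k \<omega> + S k j \<omega> then 1 else 0)"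

lemma tau_meas: "arrival_time A k \<in> borel_measurable M"
  using meas_sub[OF tau_meas_MA] sets_MA_M by simp
lemma A_meas_HH: "0 \<le> t \<Longrightarrow> A t \<in> measurable (HH k j) (count_space UNIV)"
  by (rule meas_sub[OF A_meas_MA]) (use sets_MA_MAB sets_MAB_HH in auto)
lemma B_meas_HH: "1 \<le> k' \<Longrightarrow> B k' \<in> measurable (HH k j) (count_space UNIV)"
  by (rule meas_sub[OF B_meas_MAB]) (use sets_MAB_HH in auto)
lemma tau_meas_HH: "arrival_time A k' \<in> borel_measurable (HH k j)"
  by (rule meas_sub[OF tau_meas_MA]) (use sets_MA_MAB sets_MAB_HH in auto)

lemma Ind_meas: "0 \<le> u \<Longrightarrow> Ind u k j \<in> borel_measurable M"
proof (cases "1 \<le> k \<and> 1 \<le> j")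
  case True
  assume u: "0 \<le> u"
  note [measurable] = A_meas[OF u] B_meas[of k] tau_meas[of k] S_meas[of k j]
  show ?thesis unfolding Ind_def using True by measurable
next
  case False
  then have "Ind u k j = (\<lambda>_. 0)" by (auto simp: Ind_def fun_eq_iff)
  then show ?thesis by simp
qed

lemma Ind_meas_HH: "0 \<le> u \<Longrightarrow> (k, j) \<noteq> (k', j') \<Longrightarrow> Ind u k j \<in> borel_measurable (HH k' j')"
proof (cases "1 \<le> k \<and> 1 \<le> j")
  case True
  assume u: "0 \<le> u" and ne: "(k, j) \<noteq> (k', j')"
  note [measurable] = A_meas_HH[OF u] B_meas_HH[of k] tau_meas_HH[of k] S_meas_HH[of k j k' j']
  show ?thesis unfolding Ind_def using True ne by measurable
next
  case False
  then have "Ind u k j = (\<lambda>_. 0)" by (auto simp: Ind_def fun_eq_iff)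
  then show ?thesis by simp
qed

lemma Q_suminf:
  assumes w: "\<omega> \<in> space M"
  shows "ennreal (real (queue_length A B S u \<omega>)) = (\<Sum>k. \<Sum>j. Ind u k j \<omega>)"
proof -
  have inner: "(\<Sum>j. Ind u k j \<omega>) = (if 1 \<le> k \<and> k \<le> A u \<omega> then
      of_nat (card {j\<in>{1..B k \<omega>}. u < arrival_time A k \<omega> + S k j \<omega>}) else 0)" for k
  proof -
    have "(\<Sum>j. Ind u k j \<omega>) = (\<Sum>j\<in>{1..B k \<omega>}. Ind u k j \<omega>)"
      by (rule suminf_finite) (auto simp: Ind_def)
    also have "\<dots> = (\<Sum>j\<in>{1..B k \<omega>}. if 1 \<le> k \<and> k \<le> A u \<omega> then
        (if u < arrival_time A k \<omega> + S k j \<omega> then 1 else 0) else 0)"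
      by (rule sum.cong) (auto simp: Ind_def)
    also have "\<dots> = (if 1 \<le> k \<and> k \<le> A u \<omega> then
      of_nat (card {j\<in>{1..B k \<omega>}. u < arrival_time A k \<omega> + S k j \<omega>}) else 0)"
      by (simp add: sum.If_cases) (auto intro!: arg_cong[where f=card])
    finally show ?thesis .
  qed
  have "(\<Sum>k. \<Sum>j. Ind u k j \<omega>) = (\<Sum>k\<in>{1..A u \<omega>}. \<Sum>j. Ind u k j \<omega>)"
    by (rule suminf_finite) (auto simp: inner)
  also have "\<dots> = (\<Sum>k\<in>{1..A u \<omega>}. of_nat (card {j\<in>{1..B k \<omega>}. u < arrival_time A k \<omega> + S k j \<omega>}))"
    by (rule sum.cong) (auto simp: inner)
  also have "\<dots> = ennreal (real (queue_length A B S u \<omega>))"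
    unfolding queue_length_def by (simp add: ennreal_of_nat_eq_real_of_nat)
  finally show ?thesis ..
qed

lemma T1:
  assumes w: "Work k j \<in> II" and Z: "Z \<in> borel_measurable (HH k j)"
    and Zv: "\<And>\<omega>. \<omega> \<in> space M \<Longrightarrow> Z \<omega> \<noteq> 0 \<Longrightarrow> arrival_time A k \<omega> \<le> v"
  shows "(\<integral>\<^sup>+\<omega>. Z \<omega> * (if v < arrival_time A k \<omega> + S k j \<omega> then 1 else 0) \<partial>M) =
         (\<integral>\<^sup>+\<omega>. Z \<omega> * ennreal (exp (- (v - arrival_time A k \<omega>) * mu)) \<partial>M)"
proof -
  have a: "(\<lambda>\<omega>. v - arrival_time A k \<omega>) \<in> borel_measurable (HH k j)"
    using tau_meas_HH by measurable
  have "(\<integral>\<^sup>+\<omega>. Z \<omega> * (if v < arrival_time A k \<omega> + S k j \<omega> then 1 else 0) \<partial>M) =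
        (\<integral>\<^sup>+\<omega>. Z \<omega> * indicator {x. v - arrival_time A k \<omega> < x} (S k j \<omega>) \<partial>M)"
    by (rule nn_integral_cong) (auto simp: indicator_def)
  also have "\<dots> = (\<integral>\<^sup>+\<omega>. Z \<omega> * ennreal (surv mu (v - arrival_time A k \<omega>)) \<partial>M)"
    by (rule surv_exp[OF w Z a])
  also have "\<dots> = (\<integral>\<^sup>+\<omega>. Z \<omega> * ennreal (exp (- (v - arrival_time A k \<omega>) * mu)) \<partial>M)"
    by (rule nn_integral_cong) (auto simp: surv_def dest: Zv)
  finally show ?thesis .
qed

end

context qm
begin

definition Old :: "real \<Rightarrow> real \<Rightarrow> nat \<Rightarrow> nat \<Rightarrow> 'a \<Rightarrow> ennreal" where
  "Old t \<delta> k j \<omega> = (if k \<le> A t \<omega> then Ind (t + \<delta>) k j \<omega> else 0)"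
definition New :: "real \<Rightarrow> real \<Rightarrow> nat \<Rightarrow> nat \<Rightarrow> 'a \<Rightarrow> ennreal" where
  "New t \<delta> k j \<omega> = (if A t \<omega> < k then Ind (t + \<delta>) k j \<omega> else 0)"

lemma HH_M: assumes "f \<in> borel_measurable (HH k j)" shows "f \<in> borel_measurable M"
  by (rule meas_sub[OF assms]) (simp_all add: sets_HH_M)

lemma Old_gen:
  assumes t: "0 \<le> t" and d: "0 \<le> \<delta>" and kj: "1 \<le> k" "1 \<le> j"
    and Z0: "Z0 \<in> borel_measurable (HH k j)"
  shows "(\<integral>\<^sup>+\<omega>. Z0 \<omega> * Old t \<delta> k j \<omega> \<partial>M) = ennreal (exp (- \<delta> * mu)) * (\<integral>\<^sup>+\<omega>. Z0 \<omega> * Ind t k j \<omega> \<partial>M)"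
proof -
  have w: "Work k j \<in> II" using kj by (rule Work_II)
  define Z where "Z \<omega> = Z0 \<omega> * (if k \<le> A t \<omega> \<and> j \<le> B k \<omega> then 1 else 0)" for \<omega>
  have Zm: "Z \<in> borel_measurable (HH k j)"
    unfolding Z_def using Z0 A_meas_HH[OF t] B_meas_HH[OF kj(1)] by measurable
  have Zv: "arrival_time A k \<omega> \<le> v" if "\<omega> \<in> space M" "Z \<omega> \<noteq> 0" "t \<le> v" for \<omega> v
    using that tau_le[OF that(1) t, of k] by (auto simp: Z_def split: if_splits)
  have e1: "Z0 \<omega> * Old t \<delta> k j \<omega> = Z \<omega> * (if t + \<delta> < arrival_time A k \<omega> + S k j \<omega> then 1 else 0)"
    if w: "\<omega> \<in> space M" for \<omega>
    using kj A_mono[OF w t, of "t + \<delta>"] d by (auto simp: Old_def Ind_def Z_def)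
  have e2: "Z0 \<omega> * Ind t k j \<omega> = Z \<omega> * (if t < arrival_time A k \<omega> + S k j \<omega> then 1 else 0)"
    if w: "\<omega> \<in> space M" for \<omega>
    using kj by (auto simp: Ind_def Z_def)
  have "(\<integral>\<^sup>+\<omega>. Z0 \<omega> * Old t \<delta> k j \<omega> \<partial>M) =
      (\<integral>\<^sup>+\<omega>. Z \<omega> * (if t + \<delta> < arrival_time A k \<omega> + S k j \<omega> then 1 else 0) \<partial>M)"
    by (rule nn_integral_cong) (rule e1)
  also have "\<dots> = (\<integral>\<^sup>+\<omega>. Z \<omega> * ennreal (exp (- (t + \<delta> - arrival_time A k \<omega>) * mu)) \<partial>M)"
    by (rule T1[OF w Zm]) (use Zv d in auto)
  also have "\<dots> = (\<integral>\<^sup>+\<omega>. ennreal (exp (- \<delta> * mu)) * (Z \<omega> * ennreal (exp (- (t - arrival_time A k \<omega>) * mu))) \<partial>M)"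
  proof (rule nn_integral_cong)
    fix \<omega>
    have "exp (- (t + \<delta> - arrival_time A k \<omega>) * mu) = exp (- \<delta> * mu) * exp (- (t - arrival_time A k \<omega>) * mu)"
      by (simp add: exp_add[symmetric] algebra_simps)
    then show "Z \<omega> * ennreal (exp (- (t + \<delta> - arrival_time A k \<omega>) * mu)) =
      ennreal (exp (- \<delta> * mu)) * (Z \<omega> * ennreal (exp (- (t - arrival_time A k \<omega>) * mu)))"
      by (simp add: ennreal_mult' mult_ac)
  qed
  also have "\<dots> = ennreal (exp (- \<delta> * mu)) * (\<integral>\<^sup>+\<omega>. Z \<omega> * ennreal (exp (- (t - arrival_time A k \<omega>) * mu)) \<partial>M)"
    by (rule nn_integral_cmult) (use HH_M[OF Zm] tau_meas in measurable)
  also have "(\<integral>\<^sup>+\<omega>. Z \<omega> * ennreal (exp (- (t - arrival_time A k \<omega>) * mu)) \<partial>M) =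
      (\<integral>\<^sup>+\<omega>. Z \<omega> * (if t < arrival_time A k \<omega> + S k j \<omega> then 1 else 0) \<partial>M)"
    by (rule T1[OF w Zm, symmetric]) (use Zv in auto)
  also have "\<dots> = (\<integral>\<^sup>+\<omega>. Z0 \<omega> * Ind t k j \<omega> \<partial>M)"
    by (rule nn_integral_cong) (rule e2[symmetric])
  finally show ?thesis .
qed

lemma claim1_term:
  assumes t: "0 \<le> t" and d: "0 \<le> \<delta>"
  shows "(\<integral>\<^sup>+\<omega>. Ind t k j \<omega> * Old t \<delta> k' j' \<omega> \<partial>M) = ennreal (exp (- \<delta> * mu)) * (\<integral>\<^sup>+\<omega>. Ind t k j \<omega> * Ind t k' j' \<omega> \<partial>M)"
proof (cases "1 \<le> k' \<and> 1 \<le> j'")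
  case False
  then have "(\<lambda>\<omega>. Ind t k j \<omega> * Old t \<delta> k' j' \<omega>) = (\<lambda>_. 0)" "(\<lambda>\<omega>. Ind t k j \<omega> * Ind t k' j' \<omega>) = (\<lambda>_. 0)"
    by (auto simp: fun_eq_iff Old_def Ind_def)
  then show ?thesis by simp
next
  case True
  show ?thesis
  proof (cases "(k, j) = (k', j')")
    case False
    then show ?thesis using Old_gen[OF t d _ _ Ind_meas_HH[OF t False]] True by auto
  next
    case eq: True
    have "(\<integral>\<^sup>+\<omega>. Ind t k j \<omega> * Old t \<delta> k' j' \<omega> \<partial>M) = (\<integral>\<^sup>+\<omega>. 1 * Old t \<delta> k' j' \<omega> \<partial>M)"
      using eq d by (intro nn_integral_cong) (auto simp: Old_def Ind_def)
    also have "\<dots> = ennreal (exp (- \<delta> * mu)) * (\<integral>\<^sup>+\<omega>. 1 * Ind t k' j' \<omega> \<partial>M)"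
      using True by (intro Old_gen[OF t d]) auto
    also have "(\<integral>\<^sup>+\<omega>. 1 * Ind t k' j' \<omega> \<partial>M) = (\<integral>\<^sup>+\<omega>. Ind t k j \<omega> * Ind t k' j' \<omega> \<partial>M)"
      using eq by (intro nn_integral_cong) (auto simp: Ind_def)
    finally show ?thesis .
  qed
qed

lemma claim2_term:
  assumes t: "0 \<le> t" and d: "0 \<le> \<delta>"
  shows "(\<integral>\<^sup>+\<omega>. Old t \<delta> k j \<omega> \<partial>M) = ennreal (exp (- \<delta> * mu)) * (\<integral>\<^sup>+\<omega>. Ind t k j \<omega> \<partial>M)"
proof (cases "1 \<le> k \<and> 1 \<le> j")
  case False
  then have "Old t \<delta> k j = (\<lambda>_. 0)" "Ind t k j = (\<lambda>_. 0)"
    by (auto simp: fun_eq_iff Old_def Ind_def)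
  then show ?thesis by simp
next
  case True
  then show ?thesis using Old_gen[OF t d, of k j "\<lambda>_. 1"] by simp
qed

definition X :: "real \<Rightarrow> nat \<Rightarrow> nat \<Rightarrow> 'a \<Rightarrow> ennreal" where
  "X t k j \<omega> = (if 1 \<le> k \<and> k \<le> A t \<omega> \<and> 1 \<le> j \<and> j \<le> B k \<omega> then ennreal (exp (- (t - arrival_time A k \<omega>) * mu)) else 0)"
definition Y :: "real \<Rightarrow> real \<Rightarrow> nat \<Rightarrow> nat \<Rightarrow> 'a \<Rightarrow> ennreal" where
  "Y t \<delta> k j \<omega> = (if 1 \<le> k \<and> A t \<omega> < k \<and> k \<le> A (t + \<delta>) \<omega> \<and> 1 \<le> j \<and> j \<le> B k \<omega>
     then ennreal (exp (- (t + \<delta> - arrival_time A k \<omega>) * mu)) else 0)"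

lemma claim3_term:
  assumes t: "0 \<le> t" and d: "0 \<le> \<delta>"
  shows "(\<integral>\<^sup>+\<omega>. Ind t k j \<omega> * New t \<delta> k' j' \<omega> \<partial>M) = (\<integral>\<^sup>+\<omega>. X t k j \<omega> * Y t \<delta> k' j' \<omega> \<partial>M)"
proof (cases "1 \<le> k \<and> 1 \<le> j \<and> 1 \<le> k' \<and> 1 \<le> j' \<and> k \<noteq> k'")
  case False
  then have "k = k' \<or> \<not> (1 \<le> k \<and> 1 \<le> j \<and> 1 \<le> k' \<and> 1 \<le> j')" by auto
  then show ?thesis
  proof
    assume "k = k'"
    then show ?thesis by (intro nn_integral_cong) (auto simp: New_def Ind_def X_def Y_def)
  next
    assume "\<not> (1 \<le> k \<and> 1 \<le> j \<and> 1 \<le> k' \<and> 1 \<le> j')"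
    then show ?thesis by (intro nn_integral_cong) (auto simp: New_def Ind_def X_def Y_def)
  qed
next
  case True
  then have kj: "1 \<le> k" "1 \<le> j" "1 \<le> k'" "1 \<le> j'" "k \<noteq> k'" by auto
  have w1: "Work k' j' \<in> II" using kj by (intro Work_II)
  have w2: "Work k j \<in> II" using kj by (intro Work_II)
  have td: "0 \<le> t + \<delta>" using t d by simp
  define Z1 where "Z1 \<omega> = Ind t k j \<omega> * (if A t \<omega> < k' \<and> k' \<le> A (t + \<delta>) \<omega> \<and> j' \<le> B k' \<omega> then 1 else 0)" for \<omega>
  have ne: "(k, j) \<noteq> (k', j')" using kj by auto
  have Z1m: "Z1 \<in> borel_measurable (HH k' j')"
  proof -
    note [measurable] = Ind_meas_HH[OF t ne] A_meas_HH[OF t] A_meas_HH[OF td] B_meas_HH[OF kj(3)]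
    show ?thesis unfolding Z1_def by measurable
  qed
  have "(\<integral>\<^sup>+\<omega>. Ind t k j \<omega> * New t \<delta> k' j' \<omega> \<partial>M) =
      (\<integral>\<^sup>+\<omega>. Z1 \<omega> * (if t + \<delta> < arrival_time A k' \<omega> + S k' j' \<omega> then 1 else 0) \<partial>M)"
    using kj by (intro nn_integral_cong) (auto simp: New_def Ind_def Z1_def)
  also have "\<dots> = (\<integral>\<^sup>+\<omega>. Z1 \<omega> * ennreal (exp (- (t + \<delta> - arrival_time A k' \<omega>) * mu)) \<partial>M)"
  proof (rule T1[OF w1 Z1m])
    fix \<omega> assume "\<omega> \<in> space M" "Z1 \<omega> \<noteq> 0"
    then show "arrival_time A k' \<omega> \<le> t + \<delta>" using tau_le[of \<omega> "t+\<delta>" k'] td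
      by (auto simp: Z1_def split: if_splits)
  qed
  also have "\<dots> = (\<integral>\<^sup>+\<omega>. Ind t k j \<omega> * Y t \<delta> k' j' \<omega> \<partial>M)"
    using kj by (intro nn_integral_cong) (auto simp: Y_def Z1_def)
  also have "\<dots> = (\<integral>\<^sup>+\<omega>. ((if k \<le> A t \<omega> \<and> j \<le> B k \<omega> then 1 else 0) * Y t \<delta> k' j' \<omega>) *
        (if t < arrival_time A k \<omega> + S k j \<omega> then 1 else 0) \<partial>M)"
    using kj by (intro nn_integral_cong) (auto simp: Ind_def)
  also have "\<dots> = (\<integral>\<^sup>+\<omega>. ((if k \<le> A t \<omega> \<and> j \<le> B k \<omega> then 1 else 0) * Y t \<delta> k' j' \<omega>) *
        ennreal (exp (- (t - arrival_time A k \<omega>) * mu)) \<partial>M)"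
  proof (rule T1[OF w2])
    show "(\<lambda>\<omega>. (if k \<le> A t \<omega> \<and> j \<le> B k \<omega> then 1 else 0) * Y t \<delta> k' j' \<omega>) \<in> borel_measurable (HH k j)"
      unfolding Y_def using A_meas_HH[OF t] A_meas_HH[OF td] B_meas_HH[OF kj(1)] B_meas_HH[OF kj(3)] tau_meas_HH
      by measurable
  next
    fix \<omega> assume "\<omega> \<in> space M" "(if k \<le> A t \<omega> \<and> j \<le> B k \<omega> then 1 else 0) * Y t \<delta> k' j' \<omega> \<noteq> 0"
    then show "arrival_time A k \<omega> \<le> t" using tau_le[of \<omega> t k] t
      by (auto split: if_splits)
  qed
  also have "\<dots> = (\<integral>\<^sup>+\<omega>. X t k j \<omega> * Y t \<delta> k' j' \<omega> \<partial>M)"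
    using kj by (intro nn_integral_cong) (auto simp: X_def mult_ac)
  finally show ?thesis .
qed

end

lemma nn_integral_sum2:
  fixes f :: "nat \<Rightarrow> nat \<Rightarrow> 'a \<Rightarrow> ennreal"
  assumes f: "\<And>k j. f k j \<in> borel_measurable M"
  shows "(\<integral>\<^sup>+\<omega>. (\<Sum>k. \<Sum>j. f k j \<omega>) \<partial>M) = (\<Sum>k. \<Sum>j. \<integral>\<^sup>+\<omega>. f k j \<omega> \<partial>M)"
proof -
  have "(\<integral>\<^sup>+\<omega>. (\<Sum>k. \<Sum>j. f k j \<omega>) \<partial>M) = (\<Sum>k. \<integral>\<^sup>+\<omega>. (\<Sum>j. f k j \<omega>) \<partial>M)"
    by (rule nn_integral_suminf) (insert f, measurable)
  also have "\<dots> = (\<Sum>k. \<Sum>j. \<integral>\<^sup>+\<omega>. f k j \<omega> \<partial>M)"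
    by (intro arg_cong[where f=suminf] ext nn_integral_suminf) (insert f, measurable)
  finally show ?thesis .
qed

context qm
begin

definition QQ :: "real \<Rightarrow> 'a \<Rightarrow> ennreal" where
  "QQ u \<omega> = (\<Sum>k. \<Sum>j. Ind u k j \<omega>)"

lemma Old_meas: assumes t: "0 \<le> t" and d: "0 \<le> \<delta>" shows "Old t \<delta> k j \<in> borel_measurable M"
proof -
  note [measurable] = A_meas[OF t] Ind_meas[of "t+\<delta>" k j, OF add_nonneg_nonneg[OF t d]]
  show ?thesis unfolding Old_def by measurable
qed
lemma New_meas: assumes t: "0 \<le> t" and d: "0 \<le> \<delta>" shows "New t \<delta> k j \<in> borel_measurable M"
proof -
  note [measurable] = A_meas[OF t] Ind_meas[of "t+\<delta>" k j, OF add_nonneg_nonneg[OF t d]]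
  show ?thesis unfolding New_def by measurable
qed

lemma QQ_split: "\<omega> \<in> space M \<Longrightarrow> QQ (t + \<delta>) \<omega> = (\<Sum>k. \<Sum>j. Old t \<delta> k j \<omega>) + (\<Sum>k. \<Sum>j. New t \<delta> k j \<omega>)"
proof -
  have "Ind (t + \<delta>) k j \<omega> = Old t \<delta> k j \<omega> + New t \<delta> k j \<omega>" for k j
    by (auto simp: Old_def New_def)
  then show ?thesis unfolding QQ_def by (simp add: suminf_add)
qed

lemma C1:
  assumes t: "0 \<le> t" and d: "0 \<le> \<delta>"
  shows "(\<integral>\<^sup>+\<omega>. QQ t \<omega> * (\<Sum>k. \<Sum>j. Old t \<delta> k j \<omega>) \<partial>M) = ennreal (exp (- \<delta> * mu)) * (\<integral>\<^sup>+\<omega>. QQ t \<omega> * QQ t \<omega> \<partial>M)"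
proof -
  have "(\<integral>\<^sup>+\<omega>. QQ t \<omega> * (\<Sum>k. \<Sum>j. Old t \<delta> k j \<omega>) \<partial>M) =
     (\<Sum>k. \<Sum>j. \<Sum>k'. \<Sum>j'. \<integral>\<^sup>+\<omega>. Ind t k j \<omega> * Old t \<delta> k' j' \<omega> \<partial>M)"
    unfolding QQ_def by (rule nn_integral_prod_suminf2) (rule Ind_meas[OF t], rule Old_meas[OF t d])
  also have "\<dots> = (\<Sum>k. \<Sum>j. \<Sum>k'. \<Sum>j'. ennreal (exp (- \<delta> * mu)) * \<integral>\<^sup>+\<omega>. Ind t k j \<omega> * Ind t k' j' \<omega> \<partial>M)"
    by (simp only: claim1_term[OF t d])
  also have "\<dots> = ennreal (exp (- \<delta> * mu)) * (\<Sum>k. \<Sum>j. \<Sum>k'. \<Sum>j'. \<integral>\<^sup>+\<omega>. Ind t k j \<omega> * Ind t k' j' \<omega> \<partial>M)"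
    by (simp only: ennreal_suminf_cmult)
  also have "(\<Sum>k. \<Sum>j. \<Sum>k'. \<Sum>j'. \<integral>\<^sup>+\<omega>. Ind t k j \<omega> * Ind t k' j' \<omega> \<partial>M) = (\<integral>\<^sup>+\<omega>. QQ t \<omega> * QQ t \<omega> \<partial>M)"
    unfolding QQ_def by (rule nn_integral_prod_suminf2[symmetric]) (rule Ind_meas[OF t], rule Ind_meas[OF t])
  finally show ?thesis .
qed

lemma C2:
  assumes t: "0 \<le> t" and d: "0 \<le> \<delta>"
  shows "(\<integral>\<^sup>+\<omega>. (\<Sum>k. \<Sum>j. Old t \<delta> k j \<omega>) \<partial>M) = ennreal (exp (- \<delta> * mu)) * (\<integral>\<^sup>+\<omega>. QQ t \<omega> \<partial>M)"
proof -
  have "(\<integral>\<^sup>+\<omega>. (\<Sum>k. \<Sum>j. Old t \<delta> k j \<omega>) \<partial>M) = (\<Sum>k. \<Sum>j. \<integral>\<^sup>+\<omega>. Old t \<delta> k j \<omega> \<partial>M)"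
    by (simp only: nn_integral_sum2[of "Old t \<delta>", OF Old_meas[OF t d]])
  moreover have "(\<integral>\<^sup>+\<omega>. QQ t \<omega> \<partial>M) = (\<Sum>k. \<Sum>j. \<integral>\<^sup>+\<omega>. Ind t k j \<omega> \<partial>M)"
    unfolding QQ_def by (simp only: nn_integral_sum2[of "Ind t", OF Ind_meas[OF t]])
  ultimately show ?thesis by (simp only: claim2_term[OF t d] ennreal_suminf_cmult)
qed

lemma C3:
  assumes t: "0 \<le> t" and d: "0 \<le> \<delta>"
  shows "(\<integral>\<^sup>+\<omega>. QQ t \<omega> * (\<Sum>k. \<Sum>j. New t \<delta> k j \<omega>) \<partial>M) =
    (\<integral>\<^sup>+\<omega>. (\<Sum>k. \<Sum>j. X t k j \<omega>) * (\<Sum>k. \<Sum>j. Y t \<delta> k j \<omega>) \<partial>M)"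
proof -
  have Xm: "X t k j \<in> borel_measurable M" for k j
  proof (cases "1 \<le> k")
    case True
    note [measurable] = A_meas[OF t] B_meas[OF True] tau_meas[of k]
    show ?thesis unfolding X_def by measurable
  next
    case False
    then have "X t k j = (\<lambda>_. 0)" by (auto simp: X_def fun_eq_iff)
    then show ?thesis by simp
  qed
  have Ym: "Y t \<delta> k j \<in> borel_measurable M" for k j
  proof (cases "1 \<le> k")
    case True
    note [measurable] = A_meas[OF t] A_meas[of "t+\<delta>", OF add_nonneg_nonneg[OF t d]] B_meas[OF True] tau_meas[of k]
    show ?thesis unfolding Y_def by measurable
  next
    case False
    then have "Y t \<delta> k j = (\<lambda>_. 0)" by (auto simp: Y_def fun_eq_iff)
    then show ?thesis by simp
  qed
  show ?thesis unfolding QQ_def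
    by (simp only: nn_integral_prod_suminf2[OF Ind_meas[OF t] New_meas[OF t d]]
       nn_integral_prod_suminf2[OF Xm Ym] claim3_term[OF t d])
qed

end

lemma pmf_suminf1: "(\<Sum>v. ennreal (pmf (p::nat pmf) v)) = 1"
proof -
  have "(\<integral>\<^sup>+ x. 1 \<partial>measure_pmf p) = 1"
    using measure_pmf.emeasure_space_1[of p] by simp
  then have "(\<integral>\<^sup>+ x. ennreal (pmf p x) \<partial>count_space UNIV) = 1"
    by (simp add: measure_pmf_eq_density nn_integral_density pmf_nonneg del: nn_integral_const)
  then show ?thesis by (simp add: nn_integral_count_space_nat)
qed

context qm
begin

definition RR :: "nat \<Rightarrow> 'a set" where "RR n = {\<omega> \<in> space M. \<exists>s\<ge>0. n \<le> A s \<omega>}"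
definition Bset :: "nat set \<Rightarrow> (nat \<Rightarrow> nat) \<Rightarrow> 'a set" where
  "Bset K b = {\<omega> \<in> space M. \<forall>k\<in>K. B k \<omega> = b k}"
definition pb :: "nat set \<Rightarrow> (nat \<Rightarrow> nat) \<Rightarrow> 'a \<Rightarrow> ennreal" where
  "pb K b \<omega> = (\<Prod>k\<in>K. ennreal (pmf (beta (arrival_time A k \<omega>)) (b k)))"

lemma RR_MA: "RR n \<in> sets MA" unfolding RR_def by (rule reach_MA)
lemma arrival_events_MA: "arrival_events M A = sets MA"
  unfolding arrival_events_def sets_MA GA_def ..

lemma pmf_meas: "(\<lambda>s. pmf (beta s) b) \<in> borel_measurable borel"
  using model unfolding batch_model_def by blast

lemma pmf_tau_meas: "(\<lambda>\<omega>. pmf (beta (arrival_time A k \<omega>)) b) \<in> borel_measurable MA"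
  using measurable_compose[OF tau_meas_MA pmf_meas] by simp

lemma pb_meas_MA: "pb K b \<in> borel_measurable MA"
  unfolding pb_def using pmf_tau_meas by measurable

lemma MA_M: assumes "f \<in> borel_measurable MA" shows "f \<in> borel_measurable M"
  by (rule meas_sub[OF assms]) (simp_all add: sets_MA_M)

lemma pb_meas: "pb K b \<in> borel_measurable M" by (rule MA_M[OF pb_meas_MA])

lemma Bset_sets: "K \<subseteq> {1..n} \<Longrightarrow> Bset K b \<in> sets M"
proof -
  assume K: "K \<subseteq> {1..n}"
  have "Bset K b = space M \<inter> (\<Inter>k\<in>K. B k -` {b k} \<inter> space M)" by (auto simp: Bset_def)
  also have "\<dots> \<in> sets M"
  proof (cases "K = {}")
    case True then show ?thesis by simp
  next
    case False
    have "(\<Inter>k\<in>K. B k -` {b k} \<inter> space M) \<in> sets M"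
      using K False finite_subset[OF K] B_meas
      by (intro sets.finite_INT) (auto intro!: measurable_sets[of _ M "count_space UNIV"])
    then show ?thesis by simp
  qed
  finally show ?thesis .
qed

lemma hyp_enn:
  assumes E: "E \<in> sets MA" "E \<subseteq> RR n"
  shows "emeasure M (E \<inter> Bset {1..n} b) = (\<integral>\<^sup>+\<omega>. indicator E \<omega> * pb {1..n} b \<omega> \<partial>M)"
proof -
  define g where "g \<omega> = (\<Prod>k\<in>{1..n}. pmf (beta (arrival_time A k \<omega>)) (b k))" for \<omega>
  have EM: "E \<in> sets M" using E sets_MA_M by blast
  have gm: "g \<in> borel_measurable M" unfolding g_def using MA_M[OF pmf_tau_meas] by measurable
  have h: "measure M (E \<inter> {\<omega>\<in>space M. \<forall>k\<in>{1..n}. B k \<omega> = b k}) = (LINT \<omega>:E|M. g \<omega>)"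
    using model E unfolding batch_model_def arrival_events_MA RR_def g_def by blast
  have int: "integrable M (\<lambda>\<omega>. indicator E \<omega> *\<^sub>R g \<omega>)"
  proof (rule integrable_const_bound[where B=1])
    show "AE x in M. norm (indicator E x *\<^sub>R g x) \<le> 1"
      by (auto simp: g_def indicator_def abs_prod intro!: prod_le_1 pmf_le_1)
  qed (use gm EM in measurable)
  have "emeasure M (E \<inter> Bset {1..n} b) = ennreal (LINT \<omega>:E|M. g \<omega>)"
    using h Bset_sets[of "{1..n}" n b] EM by (simp add: emeasure_eq_measure Bset_def)
  also have "\<dots> = (\<integral>\<^sup>+\<omega>. ennreal (indicator E \<omega> *\<^sub>R g \<omega>) \<partial>M)"
    unfolding set_lebesgue_integral_def
    by (rule nn_integral_eq_integral[symmetric, OF int]) (auto simp: g_def indicator_def intro!: prod_nonneg)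
  also have "\<dots> = (\<integral>\<^sup>+\<omega>. indicator E \<omega> * pb {1..n} b \<omega> \<partial>M)"
    by (rule nn_integral_cong) (auto simp: g_def pb_def indicator_def prod_ennreal)
  finally show ?thesis .
qed

lemma marg:
  assumes E: "E \<in> sets MA" "E \<subseteq> RR n" and K: "K \<subseteq> {1..n}"
  shows "emeasure M (E \<inter> Bset K b) = (\<integral>\<^sup>+\<omega>. indicator E \<omega> * pb K b \<omega> \<partial>M)"
proof -
  have EM: "E \<in> sets M" using E sets_MA_M by blast
  have key: "\<forall>b. emeasure M (E \<inter> Bset ({1..n} - L) b) = (\<integral>\<^sup>+\<omega>. indicator E \<omega> * pb ({1..n} - L) b \<omega> \<partial>M)"
    if L: "L \<subseteq> {1..n}" for L
    using finite_subset[OF L finite_atLeastAtMost] L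
  proof (induction L rule: finite_induct)
    case empty then show ?case using hyp_enn[OF E] by simp
  next
    case (insert x L)
    have x: "x \<in> {1..n}" "x \<notin> L" using insert by auto
    have IH: "\<forall>b. emeasure M (E \<inter> Bset ({1..n} - L) b) = (\<integral>\<^sup>+\<omega>. indicator E \<omega> * pb ({1..n} - L) b \<omega> \<partial>M)"
      using insert by auto
    show ?case
    proof
      fix b
      define K where "K = {1..n} - L"
      have xK: "x \<in> K" using x by (simp add: K_def)
      have K'eq: "{1..n} - insert x L = K - {x}" by (auto simp: K_def)
      have KS: "K \<subseteq> {1..n}" by (auto simp: K_def)
      have U: "E \<inter> Bset (K - {x}) b = (\<Union>v. E \<inter> Bset K (b(x:=v)))"
        using xK by (auto simp: Bset_def)
      have disj: "disjoint_family (\<lambda>v. E \<inter> Bset K (b(x:=v)))"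
        using xK by (auto simp: disjoint_family_on_def Bset_def)
      have rng: "range (\<lambda>v. E \<inter> Bset K (b(x:=v))) \<subseteq> sets M"
        using EM Bset_sets[OF KS] by auto
      have pbx: "pb K (b(x:=v)) \<omega> = pb (K - {x}) b \<omega> * ennreal (pmf (beta (arrival_time A x \<omega>)) v)" for v \<omega>
        unfolding pb_def using xK finite_subset[OF KS]
        by (subst prod.remove[of K x]) (auto simp: mult.commute intro!: prod.cong)
      have "emeasure M (E \<inter> Bset (K - {x}) b) = (\<Sum>v. emeasure M (E \<inter> Bset K (b(x:=v))))"
        unfolding U by (rule suminf_emeasure[OF rng disj, symmetric])
      also have "\<dots> = (\<Sum>v. \<integral>\<^sup>+\<omega>. indicator E \<omega> * pb K (b(x:=v)) \<omega> \<partial>M)"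
        using IH by (simp add: K_def)
      also have "\<dots> = (\<Sum>v. \<integral>\<^sup>+\<omega>. indicator E \<omega> * pb (K - {x}) b \<omega> * ennreal (pmf (beta (arrival_time A x \<omega>)) v) \<partial>M)"
        by (simp add: pbx mult.assoc)
      also have "\<dots> = (\<integral>\<^sup>+\<omega>. (\<Sum>v. indicator E \<omega> * pb (K - {x}) b \<omega> * ennreal (pmf (beta (arrival_time A x \<omega>)) v)) \<partial>M)"
        by (rule nn_integral_suminf[symmetric]) (use EM pb_meas MA_M[OF pmf_tau_meas] in measurable)
      also have "\<dots> = (\<integral>\<^sup>+\<omega>. indicator E \<omega> * pb (K - {x}) b \<omega> \<partial>M)"
        by (simp add: pmf_suminf1)
      finally show "emeasure M (E \<inter> Bset ({1..n} - insert x L) b) = (\<integral>\<^sup>+\<omega>. indicator E \<omega> * pb ({1..n} - insert x L) b \<omega> \<partial>M)"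
        unfolding K'eq .
    qed
  qed
  have "{1..n} - ({1..n} - K) = K" using K by auto
  then show ?thesis using key[of "{1..n} - K"] by auto
qed

end

context qm
begin

lemma id_meas_density: "(\<lambda>x. x) \<in> measurable (density M f) MA"
  using sets_MA_M by (auto simp: measurable_def)

lemma ext_fun:
  assumes h: "h \<in> borel_measurable MA"
    and supp: "\<And>\<omega>. \<omega> \<in> space M \<Longrightarrow> h \<omega> \<noteq> 0 \<Longrightarrow> \<omega> \<in> RR n"
    and K: "K \<subseteq> {1..n}"
  shows "(\<integral>\<^sup>+\<omega>. h \<omega> * indicator (Bset K b) \<omega> \<partial>M) = (\<integral>\<^sup>+\<omega>. h \<omega> * pb K b \<omega> \<partial>M)"
proof -
  define F where "F = Bset K b"
  define R where "R = RR n"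
  have FM: "F \<in> sets M" unfolding F_def by (rule Bset_sets[OF K])
  have RMA: "R \<in> sets MA" unfolding R_def by (rule RR_MA)
  have RM: "R \<in> sets M" using RMA sets_MA_M by blast
  have hM: "h \<in> borel_measurable M" by (rule MA_M[OF h])
  define f1 :: "'a \<Rightarrow> ennreal" where "f1 \<omega> = indicator (R \<inter> F) \<omega>" for \<omega>
  define f2 where "f2 \<omega> = indicator R \<omega> * pb K b \<omega>" for \<omega>
  have f1m: "f1 \<in> borel_measurable M" unfolding f1_def using RM FM by measurable
  have f2m: "f2 \<in> borel_measurable M" unfolding f2_def using RM pb_meas by measurable
  have eq: "distr (density M f1) MA (\<lambda>x. x) = distr (density M f2) MA (\<lambda>x. x)"
  proof (rule measure_eqI)
    show "sets (distr (density M f1) MA (\<lambda>x. x)) = sets (distr (density M f2) MA (\<lambda>x. x))" by simp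
  next
    fix E assume "E \<in> sets (distr (density M f1) MA (\<lambda>x. x))"
    then have E: "E \<in> sets MA" by simp
    then have EM: "E \<in> sets M" using sets_MA_M by blast
    have ERMA: "E \<inter> R \<in> sets MA" using E RMA by auto
    have ERsub: "E \<inter> R \<subseteq> RR n" by (auto simp: R_def)
    have ES: "E \<subseteq> space M" using sets.sets_into_space[OF EM] .
    have "emeasure (distr (density M f1) MA (\<lambda>x. x)) E = emeasure (density M f1) E"
      using ES by (subst emeasure_distr[OF id_meas_density E]) (auto intro!: arg_cong[where f="emeasure _"])
    also have "\<dots> = (\<integral>\<^sup>+\<omega>. f1 \<omega> * indicator E \<omega> \<partial>M)" by (rule emeasure_density[OF f1m EM])
    also have "\<dots> = (\<integral>\<^sup>+\<omega>. indicator ((E \<inter> R) \<inter> F) \<omega> \<partial>M)"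
      by (rule nn_integral_cong) (auto simp: f1_def indicator_def)
    also have "\<dots> = emeasure M ((E \<inter> R) \<inter> F)" using EM RM FM by simp
    also have "\<dots> = (\<integral>\<^sup>+\<omega>. indicator (E \<inter> R) \<omega> * pb K b \<omega> \<partial>M)"
      unfolding F_def by (rule marg[OF ERMA ERsub K])
    also have "\<dots> = (\<integral>\<^sup>+\<omega>. f2 \<omega> * indicator E \<omega> \<partial>M)"
      by (rule nn_integral_cong) (auto simp: f2_def indicator_def)
    also have "\<dots> = emeasure (density M f2) E" by (rule emeasure_density[OF f2m EM, symmetric])
    also have "\<dots> = emeasure (distr (density M f2) MA (\<lambda>x. x)) E"
      using ES by (subst emeasure_distr[OF id_meas_density E]) (auto intro!: arg_cong[where f="emeasure _"])
    finally show "emeasure (distr (density M f1) MA (\<lambda>x. x)) E = emeasure (distr (density M f2) MA (\<lambda>x. x)) E" .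
  qed
  have "(\<integral>\<^sup>+\<omega>. h \<omega> * indicator (Bset K b) \<omega> \<partial>M) = (\<integral>\<^sup>+\<omega>. f1 \<omega> * h \<omega> \<partial>M)"
    using supp by (intro nn_integral_cong) (auto simp: f1_def F_def R_def indicator_def mult.commute)
  also have "\<dots> = integral\<^sup>N (density M f1) h" by (rule nn_integral_density[OF f1m hM, symmetric])
  also have "\<dots> = integral\<^sup>N (distr (density M f1) MA (\<lambda>x. x)) h"
    by (rule nn_integral_distr[OF id_meas_density, symmetric]) (simp add: h)
  also have "\<dots> = integral\<^sup>N (distr (density M f2) MA (\<lambda>x. x)) h" by (simp add: eq)
  also have "\<dots> = integral\<^sup>N (density M f2) h"
    by (rule nn_integral_distr[OF id_meas_density]) (simp add: h)
  also have "\<dots> = (\<integral>\<^sup>+\<omega>. f2 \<omega> * h \<omega> \<partial>M)" by (rule nn_integral_density[OF f2m hM])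
  also have "\<dots> = (\<integral>\<^sup>+\<omega>. h \<omega> * pb K b \<omega> \<partial>M)"
    using supp by (intro nn_integral_cong) (auto simp: f2_def R_def indicator_def mult.commute)
  finally show ?thesis .
qed

definition mB :: "real \<Rightarrow> ennreal" where
  "mB s = (\<Sum>v. of_nat v * ennreal (pmf (beta s) v))"

lemma mB_meas: "mB \<in> borel_measurable borel"
  unfolding mB_def using pmf_meas by measurable

lemma mB_tau_meas_MA: "(\<lambda>\<omega>. mB (arrival_time A k \<omega>)) \<in> borel_measurable MA"
  using measurable_compose[OF tau_meas_MA mB_meas] by simp

lemma batch1:
  assumes h: "h \<in> borel_measurable MA"
    and supp: "\<And>\<omega>. \<omega> \<in> space M \<Longrightarrow> h \<omega> \<noteq> 0 \<Longrightarrow> \<omega> \<in> RR n"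
    and k: "1 \<le> k" "k \<le> n"
  shows "(\<integral>\<^sup>+\<omega>. h \<omega> * of_nat (B k \<omega>) \<partial>M) = (\<integral>\<^sup>+\<omega>. h \<omega> * mB (arrival_time A k \<omega>) \<partial>M)"
proof -
  have hM: "h \<in> borel_measurable M" by (rule MA_M[OF h])
  have K: "{k} \<subseteq> {1..n}" using k by auto
  have pt: "(of_nat (B k \<omega>) :: ennreal) = (\<Sum>v. of_nat v * indicator (Bset {k} (\<lambda>_. v)) \<omega>)" if w: "\<omega> \<in> space M" for \<omega>
  proof -
    have "(\<Sum>v. of_nat v * indicator (Bset {k} (\<lambda>_. v)) \<omega> :: ennreal) = (\<Sum>v\<in>{B k \<omega>}. of_nat v * indicator (Bset {k} (\<lambda>_. v)) \<omega>)"
      by (rule suminf_finite) (auto simp: Bset_def indicator_def)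
    also have "\<dots> = of_nat (B k \<omega>)" using w by (simp add: Bset_def indicator_def)
    finally show ?thesis by (rule sym)
  qed
  have "(\<integral>\<^sup>+\<omega>. h \<omega> * of_nat (B k \<omega>) \<partial>M) = (\<integral>\<^sup>+\<omega>. (\<Sum>v. of_nat v * (h \<omega> * indicator (Bset {k} (\<lambda>_. v)) \<omega>)) \<partial>M)"
    by (rule nn_integral_cong) (simp add: pt mult_ac ennreal_suminf_cmult[symmetric] del: ennreal_suminf_cmult)
  also have "\<dots> = (\<Sum>v. \<integral>\<^sup>+\<omega>. of_nat v * (h \<omega> * indicator (Bset {k} (\<lambda>_. v)) \<omega>) \<partial>M)"
    by (rule nn_integral_suminf) (use hM Bset_sets[OF K] in measurable)
  also have "\<dots> = (\<Sum>v. of_nat v * \<integral>\<^sup>+\<omega>. h \<omega> * indicator (Bset {k} (\<lambda>_. v)) \<omega> \<partial>M)"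
    by (intro arg_cong[where f=suminf] ext nn_integral_cmult) (use hM Bset_sets[OF K] in measurable)
  also have "\<dots> = (\<Sum>v. of_nat v * \<integral>\<^sup>+\<omega>. h \<omega> * pb {k} (\<lambda>_. v) \<omega> \<partial>M)"
    by (simp add: ext_fun[OF h supp K])
  also have "\<dots> = (\<Sum>v. of_nat v * \<integral>\<^sup>+\<omega>. h \<omega> * ennreal (pmf (beta (arrival_time A k \<omega>)) v) \<partial>M)"
    by (simp add: pb_def)
  also have "\<dots> = (\<Sum>v. \<integral>\<^sup>+\<omega>. of_nat v * (h \<omega> * ennreal (pmf (beta (arrival_time A k \<omega>)) v)) \<partial>M)"
    by (intro arg_cong[where f=suminf] ext nn_integral_cmult[symmetric])
       (use hM MA_M[OF pmf_tau_meas] in measurable)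
  also have "\<dots> = (\<integral>\<^sup>+\<omega>. (\<Sum>v. of_nat v * (h \<omega> * ennreal (pmf (beta (arrival_time A k \<omega>)) v))) \<partial>M)"
    by (rule nn_integral_suminf[symmetric]) (use hM MA_M[OF pmf_tau_meas] in measurable)
  also have "\<dots> = (\<integral>\<^sup>+\<omega>. h \<omega> * mB (arrival_time A k \<omega>) \<partial>M)"
    by (rule nn_integral_cong) (simp add: mB_def mult_ac ennreal_suminf_cmult[symmetric] del: ennreal_suminf_cmult)
  finally show ?thesis .
qed

lemma batch2:
  assumes h: "h \<in> borel_measurable MA"
    and supp: "\<And>\<omega>. \<omega> \<in> space M \<Longrightarrow> h \<omega> \<noteq> 0 \<Longrightarrow> \<omega> \<in> RR n"
    and k: "1 \<le> k" "k \<le> n" "1 \<le> k'" "k' \<le> n" "k \<noteq> k'"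
  shows "(\<integral>\<^sup>+\<omega>. h \<omega> * (of_nat (B k \<omega>) * of_nat (B k' \<omega>)) \<partial>M) =
         (\<integral>\<^sup>+\<omega>. h \<omega> * (mB (arrival_time A k \<omega>) * mB (arrival_time A k' \<omega>)) \<partial>M)"
proof -
  have hM: "h \<in> borel_measurable M" by (rule MA_M[OF h])
  define K where "K = {k, k'}"
  have K: "K \<subseteq> {1..n}" using k by (auto simp: K_def)
  define bb where "bb v v' = (\<lambda>i. if i = k then v else v')" for v v' :: nat
  have memB: "\<omega> \<in> Bset K (bb v v') \<longleftrightarrow> \<omega> \<in> space M \<and> B k \<omega> = v \<and> B k' \<omega> = v'" for \<omega> v v'
    using k by (auto simp: Bset_def K_def bb_def)
  define c where "c v v' \<omega> = (of_nat v * of_nat v' * indicator (Bset K (bb v v')) \<omega> :: ennreal)" for v v' \<omega>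
  have pt: "(of_nat (B k \<omega>) * of_nat (B k' \<omega>) :: ennreal) = (\<Sum>v. \<Sum>v'. c v v' \<omega>)" if w: "\<omega> \<in> space M" for \<omega>
  proof -
    have inner: "(\<Sum>v'. c v v' \<omega>) = (if B k \<omega> = v then of_nat v * of_nat (B k' \<omega>) else 0)" for v
    proof -
      have "(\<Sum>v'. c v v' \<omega>) = (\<Sum>v'\<in>{B k' \<omega>}. c v v' \<omega>)"
        by (rule suminf_finite) (auto simp: c_def indicator_def memB)
      then show ?thesis using w by (simp add: c_def indicator_def memB)
    qed
    have "(\<Sum>v. \<Sum>v'. c v v' \<omega>) = (\<Sum>v\<in>{B k \<omega>}. \<Sum>v'. c v v' \<omega>)"
      by (rule suminf_finite) (auto simp: inner)
    then show ?thesis by (simp add: inner)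
  qed
  have cm: "(\<lambda>\<omega>. c v v' \<omega>) \<in> borel_measurable M" for v v'
    unfolding c_def using Bset_sets[OF K] by measurable
  have pbK: "pb K (bb v v') \<omega> = ennreal (pmf (beta (arrival_time A k \<omega>)) v) * ennreal (pmf (beta (arrival_time A k' \<omega>)) v')" for v v' \<omega>
    using k by (simp add: pb_def K_def bb_def)
  have "(\<integral>\<^sup>+\<omega>. h \<omega> * (of_nat (B k \<omega>) * of_nat (B k' \<omega>)) \<partial>M) =
      (\<integral>\<^sup>+\<omega>. (\<Sum>v. \<Sum>v'. of_nat v * of_nat v' * (h \<omega> * indicator (Bset K (bb v v')) \<omega>)) \<partial>M)"
  proof (rule nn_integral_cong)
    fix \<omega> assume w: "\<omega> \<in> space M"
    have "h \<omega> * (of_nat (B k \<omega>) * of_nat (B k' \<omega>)) = h \<omega> * (\<Sum>v. \<Sum>v'. c v v' \<omega>)" by (simp only: pt[OF w])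
    also have "\<dots> = (\<Sum>v. \<Sum>v'. h \<omega> * c v v' \<omega>)" by (simp only: ennreal_suminf_cmult)
    also have "\<dots> = (\<Sum>v. \<Sum>v'. of_nat v * of_nat v' * (h \<omega> * indicator (Bset K (bb v v')) \<omega>))"
      by (simp only: c_def mult_ac)
    finally show "h \<omega> * (of_nat (B k \<omega>) * of_nat (B k' \<omega>)) = (\<Sum>v. \<Sum>v'. of_nat v * of_nat v' * (h \<omega> * indicator (Bset K (bb v v')) \<omega>))" .
  qed
  also have "\<dots> = (\<Sum>v. \<Sum>v'. \<integral>\<^sup>+\<omega>. of_nat v * of_nat v' * (h \<omega> * indicator (Bset K (bb v v')) \<omega>) \<partial>M)"
    by (rule nn_integral_sum2) (use hM Bset_sets[OF K] in measurable)
  also have "\<dots> = (\<Sum>v. \<Sum>v'. of_nat v * of_nat v' * \<integral>\<^sup>+\<omega>. h \<omega> * indicator (Bset K (bb v v')) \<omega> \<partial>M)"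
    by (intro arg_cong[where f=suminf] ext nn_integral_cmult) (use hM Bset_sets[OF K] in measurable)
  also have "\<dots> = (\<Sum>v. \<Sum>v'. of_nat v * of_nat v' * \<integral>\<^sup>+\<omega>. h \<omega> * pb K (bb v v') \<omega> \<partial>M)"
    by (simp add: ext_fun[OF h supp K])
  also have "\<dots> = (\<Sum>v. \<Sum>v'. of_nat v * of_nat v' * \<integral>\<^sup>+\<omega>. h \<omega> * (ennreal (pmf (beta (arrival_time A k \<omega>)) v) * ennreal (pmf (beta (arrival_time A k' \<omega>)) v')) \<partial>M)"
    by (simp only: pbK)
  also have "\<dots> = (\<Sum>v. \<Sum>v'. \<integral>\<^sup>+\<omega>. of_nat v * of_nat v' * (h \<omega> * (ennreal (pmf (beta (arrival_time A k \<omega>)) v) * ennreal (pmf (beta (arrival_time A k' \<omega>)) v'))) \<partial>M)"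
    by (intro arg_cong[where f=suminf] ext nn_integral_cmult[symmetric]) (use hM MA_M[OF pmf_tau_meas] in measurable)
  also have "\<dots> = (\<integral>\<^sup>+\<omega>. (\<Sum>v. \<Sum>v'. of_nat v * of_nat v' * (h \<omega> * (ennreal (pmf (beta (arrival_time A k \<omega>)) v) * ennreal (pmf (beta (arrival_time A k' \<omega>)) v')))) \<partial>M)"
    by (rule nn_integral_sum2[symmetric]) (use hM MA_M[OF pmf_tau_meas] in measurable)
  also have "\<dots> = (\<integral>\<^sup>+\<omega>. h \<omega> * (mB (arrival_time A k \<omega>) * mB (arrival_time A k' \<omega>)) \<partial>M)"
  proof (rule nn_integral_cong)
    fix \<omega>
    let ?p = "\<lambda>v. ennreal (pmf (beta (arrival_time A k \<omega>)) v)"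
    let ?q = "\<lambda>v. ennreal (pmf (beta (arrival_time A k' \<omega>)) v)"
    have "h \<omega> * (mB (arrival_time A k \<omega>) * mB (arrival_time A k' \<omega>)) =
        h \<omega> * ((\<Sum>v. of_nat v * ?p v) * (\<Sum>v'. of_nat v' * ?q v'))" by (simp only: mB_def)
    also have "\<dots> = (\<Sum>v. \<Sum>v'. h \<omega> * ((of_nat v * ?p v) * (of_nat v' * ?q v')))"
      by (simp only: ennreal_suminf_cmult ennreal_suminf_multc)
    also have "\<dots> = (\<Sum>v. \<Sum>v'. of_nat v * of_nat v' * (h \<omega> * (?p v * ?q v')))"
      by (simp only: mult_ac)
    finally show "(\<Sum>v. \<Sum>v'. of_nat v * of_nat v' * (h \<omega> * (?p v * ?q v'))) = h \<omega> * (mB (arrival_time A k \<omega>) * mB (arrival_time A k' \<omega>))" by (rule sym)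
  qed
  finally show ?thesis .
qed

end

context qm
begin

definition GP :: "real \<Rightarrow> nat \<Rightarrow> 'a set set" where
  "GP t N = {A (t * real i / 2^N) -` {m} \<inter> space M | i m. i \<le> 2^N}"
definition GF :: "real \<Rightarrow> real \<Rightarrow> nat \<Rightarrow> 'a set set" where
  "GF t \<delta> N = {(\<lambda>\<omega>. A (t + \<delta> * real i / 2^N) \<omega> - A t \<omega>) -` {m} \<inter> space M | i m. i \<le> 2^N}"

lemma increments_indep:
  assumes "0 \<le> tt 0" "mono tt"
  shows "indep_vars (\<lambda>_. count_space UNIV) (\<lambda>i \<omega>. A (tt (Suc i)) \<omega> - A (tt i) \<omega>) {..<n}"
  using PP assms unfolding nh_poisson_process_def by blast

lemma telescope:
  assumes w: "\<omega> \<in> space M" and tt0: "tt 0 = 0" and mono: "mono tt"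
  shows "A (tt j) \<omega> = (\<Sum>l<j. A (tt (Suc l)) \<omega> - A (tt l) \<omega>)"
proof (induction j)
  case 0 then show ?case using A_0[OF w] tt0 by simp
next
  case (Suc j)
  have nn: "0 \<le> tt j" using mono tt0 by (metis le0 monoD)
  have "A (tt j) \<omega> \<le> A (tt (Suc j)) \<omega>"
    using A_mono[OF w nn] mono by (simp add: monoD)
  then show ?case using Suc by simp
qed

lemma levelN_indep:
  assumes t: "0 < t" and d: "0 < \<delta>"
  shows "indep_set (sigma_sets (space M) (GP t N)) (sigma_sets (space M) (GF t \<delta> N))"
proof -
  define n :: nat where "n = 2^N"
  have n0: "0 < n" by (simp add: n_def)
  define tt where "tt j = (if j \<le> n then t * real j / n else t + \<delta> * real (min (j - n) n) / n)" for j
  have tt0: "tt 0 = 0" by (simp add: tt_def)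
  have mono: "mono tt"
  proof (rule incseq_SucI)
    fix j :: nat
    consider "Suc j \<le> n" | "j = n" | "n < j" by linarith
    then show "tt j \<le> tt (Suc j)"
    proof cases
      case 1 then show ?thesis using t n0 by (simp add: tt_def divide_right_mono)
    next
      case 2 then show ?thesis using d n0 by (simp add: tt_def)
    next
      case 3 then show ?thesis using d n0
        by (auto simp: tt_def divide_right_mono intro!: mult_left_mono)
    qed
  qed
  define D where "D l \<omega> = A (tt (Suc l)) \<omega> - A (tt l) \<omega>" for l \<omega>
  have ind: "indep_vars (\<lambda>_. count_space UNIV) D {..<2*n}"
    using increments_indep[of tt "2*n"] tt0 mono unfolding D_def by simp
  define E where "E l = {D l -` X \<inter> space M | X. X \<in> sets (count_space (UNIV::nat set))}" for l
  have indE: "indep_sets E {..<2*n}" using ind unfolding indep_vars_def2 E_def by blast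
  define I where "I b = (if b then {..<n} else {n..<2*n})" for b
  have "indep_sets (\<lambda>b. sigma_sets (space M) (\<Union>i\<in>I b. E i)) UNIV"
  proof (rule indep_sets_collect_sigma)
    have "(\<Union>b\<in>UNIV. I b) = {..<2*n}" by (auto simp: I_def)
    then show "indep_sets E (\<Union>b\<in>UNIV. I b)" using indE by simp
  next
    fix i b
    show "Int_stable (E i)" unfolding Int_stable_def E_def
    proof (clarsimp)
      fix X Y :: "nat set"
      show "\<exists>Z. D i -` X \<inter> space M \<inter> (D i -` Y \<inter> space M) = D i -` Z \<inter> space M"
        by (intro exI[of _ "X \<inter> Y"]) auto
    qed
  next
    show "disjoint_family_on I UNIV" unfolding disjoint_family_on_def I_def by auto
  qed
  then have IS: "indep_set (sigma_sets (space M) (\<Union>i\<in>I True. E i)) (sigma_sets (space M) (\<Union>i\<in>I False. E i))"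
    unfolding indep_set_def by (rule indep_sets_mono_sets) (auto split: bool.split)
  have Esub: "(\<Union>i\<in>I b. E i) \<subseteq> Pow (space M)" for b by (auto simp: E_def)
  have Dm: "(\<lambda>\<omega>. real (D l \<omega>)) \<in> borel_measurable (sigma (space M) (\<Union>i\<in>I b. E i))" if l: "l \<in> I b" for l b
  proof -
    have "D l \<in> measurable (sigma (space M) (\<Union>i\<in>I b. E i)) (count_space UNIV)"
      unfolding measurable_count_space_eq2_countable
    proof (intro conjI ballI)
      fix a :: nat
      have "D l -` {a} \<inter> space M \<in> (\<Union>i\<in>I b. E i)" using l by (auto simp: E_def)
      then show "D l -` {a} \<inter> space (sigma (space M) (\<Union>i\<in>I b. E i)) \<in> sets (sigma (space M) (\<Union>i\<in>I b. E i))"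
        using Esub[of b] by (auto simp: space_measure_of_conv intro: sigma_sets.Basic)
    qed auto
    then show ?thesis by (rule measurable_compose) simp
  qed
  have tel: "real (A (tt j) \<omega>) = (\<Sum>l<j. real (D l \<omega>))" if w: "\<omega> \<in> space M" for j \<omega>
    using telescope[OF w tt0 mono, of j] unfolding D_def by simp
  have GPsub: "GP t N \<subseteq> sigma_sets (space M) (\<Union>i\<in>I True. E i)"
  proof
    fix Z assume "Z \<in> GP t N"
    then obtain i m where i: "i \<le> n" and Z: "Z = A (t * real i / 2^N) -` {m} \<inter> space M"
      by (auto simp: GP_def n_def)
    have tti: "tt i = t * real i / 2^N" using i by (simp add: tt_def n_def)
    have meas: "(\<lambda>\<omega>. \<Sum>l<i. real (D l \<omega>)) \<in> borel_measurable (sigma (space M) (\<Union>i\<in>I True. E i))"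
      using i by (intro borel_measurable_sum Dm) (auto simp: I_def)
    have "{\<omega> \<in> space (sigma (space M) (\<Union>i\<in>I True. E i)). (\<Sum>l<i. real (D l \<omega>)) = real m} \<in> sets (sigma (space M) (\<Union>i\<in>I True. E i))"
      using meas by measurable
    moreover have "{\<omega> \<in> space (sigma (space M) (\<Union>i\<in>I True. E i)). (\<Sum>l<i. real (D l \<omega>)) = real m} = Z"
      unfolding Z using tel[of _ i] tti by (auto simp: space_measure_of_conv simp flip: of_nat_sum)
    ultimately show "Z \<in> sigma_sets (space M) (\<Union>i\<in>I True. E i)" using Esub[of True] by simp
  qed
  have GFsub: "GF t \<delta> N \<subseteq> sigma_sets (space M) (\<Union>i\<in>I False. E i)"
  proof
    fix Z assume "Z \<in> GF t \<delta> N"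
    then obtain i m where i: "i \<le> n" and Z: "Z = (\<lambda>\<omega>. A (t + \<delta> * real i / 2^N) \<omega> - A t \<omega>) -` {m} \<inter> space M"
      by (auto simp: GF_def n_def)
    have ttn: "tt n = t" using n0 by (simp add: tt_def)
    have ttni: "tt (n + i) = t + \<delta> * real i / 2^N" using i by (cases "i = 0") (auto simp: tt_def n_def)
    have eq: "real (A (t + \<delta> * real i / 2^N) \<omega> - A t \<omega>) = (\<Sum>l\<in>{n..<n+i}. real (D l \<omega>))" if w: "\<omega> \<in> space M" for \<omega>
    proof -
      have le: "A t \<omega> \<le> A (t + \<delta> * real i / 2^N) \<omega>" using A_mono[OF w] t d by simp
      have "(\<Sum>l<n+i. real (D l \<omega>)) = (\<Sum>l<n. real (D l \<omega>)) + (\<Sum>l\<in>{n..<n+i}. real (D l \<omega>))"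
        by (simp add: lessThan_atLeast0 sum.atLeastLessThan_concat)
      then show ?thesis using tel[OF w, of "n+i"] tel[OF w, of n] ttn ttni le by (simp add: of_nat_diff)
    qed
    have meas: "(\<lambda>\<omega>. \<Sum>l\<in>{n..<n+i}. real (D l \<omega>)) \<in> borel_measurable (sigma (space M) (\<Union>i\<in>I False. E i))"
      using i by (intro borel_measurable_sum Dm) (auto simp: I_def)
    have "{\<omega> \<in> space (sigma (space M) (\<Union>i\<in>I False. E i)). (\<Sum>l\<in>{n..<n+i}. real (D l \<omega>)) = real m} \<in> sets (sigma (space M) (\<Union>i\<in>I False. E i))"
      using meas by measurable
    moreover have "{\<omega> \<in> space (sigma (space M) (\<Union>i\<in>I False. E i)). (\<Sum>l\<in>{n..<n+i}. real (D l \<omega>)) = real m} = Z"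
      unfolding Z using eq by (auto simp: space_measure_of_conv simp flip: of_nat_sum)
    ultimately show "Z \<in> sigma_sets (space M) (\<Union>i\<in>I False. E i)" using Esub[of False] by simp
  qed
  show ?thesis using IS unfolding indep_set_def
    by (rule indep_sets_mono_sets) (use sigma_sets_mono[OF GPsub] sigma_sets_mono[OF GFsub] in \<open>auto split: bool.split\<close>)
qed

end

context qm
begin

definition PU :: "real \<Rightarrow> 'a set set" where "PU t = (\<Union>N. sigma_sets (space M) (GP t N))"
definition FU :: "real \<Rightarrow> real \<Rightarrow> 'a set set" where "FU t \<delta> = (\<Union>N. sigma_sets (space M) (GF t \<delta> N))"
definition MP where "MP t = sigma (space M) (PU t)"
definition MF where "MF t \<delta> = sigma (space M) (FU t \<delta>)"

lemma GP_sub: "GP t N \<subseteq> Pow (space M)" by (auto simp: GP_def)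
lemma GF_sub: "GF t \<delta> N \<subseteq> Pow (space M)" by (auto simp: GF_def)
lemma PU_sub: "PU t \<subseteq> Pow (space M)"
  unfolding PU_def using sigma_sets_into_sp[OF GP_sub] by blast
lemma FU_sub: "FU t \<delta> \<subseteq> Pow (space M)"
  unfolding FU_def using sigma_sets_into_sp[OF GF_sub] by blast

lemma GP_mono: "GP t N \<subseteq> GP t (Suc N)"
proof
  fix Z assume "Z \<in> GP t N"
  then obtain i m where i: "i \<le> 2^N" and Z: "Z = A (t * real i / 2^N) -` {m} \<inter> space M" by (auto simp: GP_def)
  have "t * real i / 2^N = t * real (2*i) / 2^(Suc N)" by simp
  then show "Z \<in> GP t (Suc N)" unfolding GP_def Z using i by (intro CollectI exI[of _ "2*i"] exI[of _ m]) auto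
qed

lemma GF_mono: "GF t \<delta> N \<subseteq> GF t \<delta> (Suc N)"
proof
  fix Z assume "Z \<in> GF t \<delta> N"
  then obtain i m where i: "i \<le> 2^N" and Z: "Z = (\<lambda>\<omega>. A (t + \<delta> * real i / 2^N) \<omega> - A t \<omega>) -` {m} \<inter> space M" by (auto simp: GF_def)
  have "t + \<delta> * real i / 2^N = t + \<delta> * real (2*i) / 2^(Suc N)" by simp
  then show "Z \<in> GF t \<delta> (Suc N)" unfolding GF_def Z using i by (intro CollectI exI[of _ "2*i"] exI[of _ m]) auto
qed

lemma LP_mono: "N \<le> N' \<Longrightarrow> sigma_sets (space M) (GP t N) \<subseteq> sigma_sets (space M) (GP t N')"
proof (induction N' rule: dec_induct)
  case (step n) show ?case by (rule order_trans[OF step.IH sigma_sets_mono'[OF GP_mono]])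
qed simp
lemma LF_mono: "N \<le> N' \<Longrightarrow> sigma_sets (space M) (GF t \<delta> N) \<subseteq> sigma_sets (space M) (GF t \<delta> N')"
proof (induction N' rule: dec_induct)
  case (step n) show ?case by (rule order_trans[OF step.IH sigma_sets_mono'[OF GF_mono]])
qed simp

lemma sigma_sets_Int2: "G \<subseteq> Pow Om \<Longrightarrow> a \<in> sigma_sets Om G \<Longrightarrow> b \<in> sigma_sets Om G \<Longrightarrow> a \<inter> b \<in> sigma_sets Om G"
  using sets.Int[of a "sigma Om G" b] by simp

lemma PU_Int: "Int_stable (PU t)"
  unfolding Int_stable_def PU_def
proof (clarsimp)
  fix a b N1 N2 assume a: "a \<in> sigma_sets (space M) (GP t N1)" and b: "b \<in> sigma_sets (space M) (GP t N2)"
  have "a \<in> sigma_sets (space M) (GP t (max N1 N2))" "b \<in> sigma_sets (space M) (GP t (max N1 N2))"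
    using a b LP_mono[of N1 "max N1 N2" t] LP_mono[of N2 "max N1 N2" t] by auto
  then show "\<exists>N. a \<inter> b \<in> sigma_sets (space M) (GP t N)" using sigma_sets_Int2[OF GP_sub] by blast
qed

lemma FU_Int: "Int_stable (FU t \<delta>)"
  unfolding Int_stable_def FU_def
proof (clarsimp)
  fix a b N1 N2 assume a: "a \<in> sigma_sets (space M) (GF t \<delta> N1)" and b: "b \<in> sigma_sets (space M) (GF t \<delta> N2)"
  have "a \<in> sigma_sets (space M) (GF t \<delta> (max N1 N2))" "b \<in> sigma_sets (space M) (GF t \<delta> (max N1 N2))"
    using a b LF_mono[of N1 "max N1 N2" t \<delta>] LF_mono[of N2 "max N1 N2" t \<delta>] by auto
  then show "\<exists>N. a \<inter> b \<in> sigma_sets (space M) (GF t \<delta> N)" using sigma_sets_Int2[OF GF_sub] by blast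
qed

lemma GP_sets: "0 \<le> t \<Longrightarrow> GP t N \<subseteq> sets M"
proof
  fix Z assume t: "0 \<le> t" and "Z \<in> GP t N"
  then obtain i m where Z: "Z = A (t * real i / 2^N) -` {m} \<inter> space M" by (auto simp: GP_def)
  have "0 \<le> t * real i / 2^N" using t by simp
  then show "Z \<in> sets M" unfolding Z by (rule measurable_sets[OF A_meas]) simp
qed

lemma GF_sets: "0 \<le> t \<Longrightarrow> 0 \<le> \<delta> \<Longrightarrow> GF t \<delta> N \<subseteq> sets M"
proof
  fix Z assume t: "0 \<le> t" and d: "0 \<le> \<delta>" and "Z \<in> GF t \<delta> N"
  then obtain i m where Z: "Z = (\<lambda>\<omega>. A (t + \<delta> * real i / 2^N) \<omega> - A t \<omega>) -` {m} \<inter> space M" by (auto simp: GF_def)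
  have "0 \<le> t + \<delta> * real i / 2^N" using t d by simp
  note [measurable] = A_meas[OF this] A_meas[OF t]
  have "{\<omega> \<in> space M. A (t + \<delta> * real i / 2^N) \<omega> - A t \<omega> = m} \<in> sets M" by measurable
  moreover have "Z = {\<omega> \<in> space M. A (t + \<delta> * real i / 2^N) \<omega> - A t \<omega> = m}" unfolding Z by auto
  ultimately show "Z \<in> sets M" by simp
qed

lemma indep_PF:
  assumes t: "0 < t" and d: "0 < \<delta>"
  shows "indep_set (sets (MP t)) (sets (MF t \<delta>))"
proof -
  have "indep_set (PU t) (FU t \<delta>)"
  proof (rule indep_setI)
    show "PU t \<subseteq> events" unfolding PU_def using sets.sigma_sets_subset[OF GP_sets[OF less_imp_le[OF t]]] by auto
    show "FU t \<delta> \<subseteq> events" unfolding FU_def using sets.sigma_sets_subset[OF GF_sets[OF less_imp_le[OF t] less_imp_le[OF d]]] by auto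
  next
    fix a b assume "a \<in> PU t" "b \<in> FU t \<delta>"
    then obtain N1 N2 where a: "a \<in> sigma_sets (space M) (GP t N1)" and b: "b \<in> sigma_sets (space M) (GF t \<delta> N2)"
      by (auto simp: PU_def FU_def)
    have "a \<in> sigma_sets (space M) (GP t (max N1 N2))" "b \<in> sigma_sets (space M) (GF t \<delta> (max N1 N2))"
      using a b LP_mono[of N1 "max N1 N2" t] LF_mono[of N2 "max N1 N2" t \<delta>] by auto
    then show "prob (a \<inter> b) = prob a * prob b" using indep_setD[OF levelN_indep[OF t d]] by blast
  qed
  then have "indep_set (sigma_sets (space M) (PU t)) (sigma_sets (space M) (FU t \<delta>))"
    by (rule indep_set_sigma_sets) (rule PU_Int, rule FU_Int)
  then show ?thesis unfolding MP_def MF_def using PU_sub FU_sub by simp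
qed

end

definition gridc :: "real \<Rightarrow> real \<Rightarrow> real \<Rightarrow> nat \<Rightarrow> nat" where
  "gridc a L y N = nat \<lceil>(y - a) * 2^N / L\<rceil>"

lemma gridc_le: assumes "0 < L" "a \<le> y" "y < a + L" shows "gridc a L y N \<le> 2^N"
proof -
  have "(y - a) * 2^N \<le> L * 2^N" using assms by (intro mult_right_mono) auto
  then have "(y - a) * 2^N / L \<le> 2^N" using assms by (simp add: pos_divide_le_eq mult.commute)
  then have "\<lceil>(y - a) * 2^N / L\<rceil> \<le> 2^N" by (simp add: ceiling_le_iff)
  then show ?thesis unfolding gridc_def by (simp add: nat_le_iff)
qed

lemma gridc_ge: assumes "0 < L" shows "y \<le> a + L * real (gridc a L y N) / 2^N"
proof -
  have "(y - a) * 2^N / L \<le> real (gridc a L y N)" unfolding gridc_def by (rule real_nat_ceiling_ge)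
  then show ?thesis using assms by (simp add: field_simps)
qed

lemma gridc_lt: assumes "0 < L" "a \<le> y" shows "a + L * real (gridc a L y N) / 2^N < y + L / 2^N"
proof -
  have nn: "0 \<le> (y - a) * 2^N / L" using assms by simp
  have "real (gridc a L y N) = of_int \<lceil>(y - a) * 2^N / L\<rceil>" unfolding gridc_def using nn by simp
  also have "\<dots> < (y - a) * 2^N / L + 1" using ceiling_correct[of "(y - a) * 2^N / L"] by linarith
  finally have "real (gridc a L y N) < (y - a) * 2^N / L + 1" .
  then have "L * real (gridc a L y N) < L * ((y - a) * 2^N / L + 1)" using assms by simp
  moreover have "L * ((y - a) * 2^N / L + 1) = (y - a) * 2^N + L" using assms by (simp add: field_simps)
  ultimately have "L * real (gridc a L y N) < (y - a) * 2^N + L" by simp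
  then have "L * real (gridc a L y N) / 2^N < ((y - a) * 2^N + L) / 2^N" by (intro divide_strict_right_mono) auto
  moreover have "((y - a) * 2^N + L) / 2^N = y - a + L / 2^N" by (simp add: field_simps)
  ultimately show ?thesis by linarith
qed

lemma natfact: "b + i \<le> (a::nat) \<Longrightarrow> i \<le> a - b" by arith

context qm
begin

lemma grid_approx:
  assumes w: "\<omega> \<in> space M" and a: "0 \<le> a" and L: "0 < L" and y: "a \<le> y" "y < a + L"
  shows "k \<le> A y \<omega> \<longleftrightarrow> (\<forall>N. k \<le> A (a + L * real (gridc a L y N) / 2^N) \<omega>)"
proof
  assume "k \<le> A y \<omega>"
  then show "\<forall>N. k \<le> A (a + L * real (gridc a L y N) / 2^N) \<omega>"
    using A_mono[OF w _ gridc_ge[OF L]] a y by (meson le_trans order_trans)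
next
  assume all: "\<forall>N. k \<le> A (a + L * real (gridc a L y N) / 2^N) \<omega>"
  show "k \<le> A y \<omega>"
  proof (rule ccontr)
    assume nk: "\<not> k \<le> A y \<omega>"
    have y0: "0 \<le> y" using a y by simp
    have "((\<lambda>s. real (A s \<omega>)) \<longlongrightarrow> real (A y \<omega>)) (at_right y)"
      using A_rcont[OF w y0] by (simp add: continuous_within)
    then have "eventually (\<lambda>s. dist (real (A s \<omega>)) (real (A y \<omega>)) < 1/2) (at_right y)"
      by (rule tendstoD) simp
    then obtain b where b: "b > y" and bP: "\<And>s. s > y \<Longrightarrow> s < b \<Longrightarrow> dist (real (A s \<omega>)) (real (A y \<omega>)) < 1/2"
      unfolding eventually_at_right[of y "y+1", simplified] by blast
    obtain N where N: "L / (b - y) < 2^N" using real_arch_pow[of 2 "L / (b - y)"] by auto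
    have "L / 2^N < b - y" using N b by (simp add: field_simps)
    define g where "g = a + L * real (gridc a L y N) / 2^N"
    have g1: "y \<le> g" unfolding g_def by (rule gridc_ge[OF L])
    have g2: "g < b" using gridc_lt[OF L y(1), of N] \<open>L / 2^N < b - y\<close> unfolding g_def by linarith
    have kg: "k \<le> A g \<omega>" using all g_def by simp
    show False
    proof (cases "g = y")
      case True then show False using kg nk by simp
    next
      case False
      then have "dist (real (A g \<omega>)) (real (A y \<omega>)) < 1/2" using bP g1 g2 by simp
      then have "A g \<omega> = A y \<omega>" by (intro nat_close_eq) (simp add: dist_real_def)
      then show False using kg nk by simp
    qed
  qed
qed

lemma space_MP[simp]: "space (MP t) = space M" unfolding MP_def by (simp add: space_measure_of_conv)
lemma space_MF[simp]: "space (MF t \<delta>) = space M" unfolding MF_def by (simp add: space_measure_of_conv)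
lemma sets_MP: "sets (MP t) = sigma_sets (space M) (PU t)" unfolding MP_def using PU_sub by simp
lemma sets_MF: "sets (MF t \<delta>) = sigma_sets (space M) (FU t \<delta>)" unfolding MF_def using FU_sub by simp

lemma Apast_meas: "c \<le> 2^N \<Longrightarrow> A (t * real c / 2^N) \<in> measurable (MP t) (count_space UNIV)"
  unfolding measurable_count_space_eq2_countable sets_MP
  by (auto simp: PU_def GP_def intro!: sigma_sets.Basic)

lemma Afut_meas: "c \<le> 2^N \<Longrightarrow> (\<lambda>\<omega>. A (t + \<delta> * real c / 2^N) \<omega> - A t \<omega>) \<in> measurable (MF t \<delta>) (count_space UNIV)"
  unfolding measurable_count_space_eq2_countable sets_MF
  by (auto simp: FU_def GF_def intro!: sigma_sets.Basic)

lemma At_meas_MP: "A t \<in> measurable (MP t) (count_space UNIV)"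
  using Apast_meas[of 1 0 t] by simp

lemma D_meas_MF: "(\<lambda>\<omega>. A (t + \<delta>) \<omega> - A t \<omega>) \<in> measurable (MF t \<delta>) (count_space UNIV)"
  using Afut_meas[of 1 0 t \<delta>] by simp

lemma past_le_meas:
  assumes t: "0 < t" and y: "0 \<le> y" "y < t"
  shows "{\<omega> \<in> space M. k \<le> A y \<omega>} \<in> sets (MP t)"
proof -
  have eq: "{\<omega> \<in> space M. k \<le> A y \<omega>} = (\<Inter>N. {\<omega> \<in> space (MP t). k \<le> A (t * real (gridc 0 t y N) / 2^N) \<omega>})"
    using grid_approx[of _ 0 t y k] t y by auto
  have "{\<omega> \<in> space (MP t). k \<le> A (t * real (gridc 0 t y N) / 2^N) \<omega>} \<in> sets (MP t)" for N
  proof -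
    have cle: "gridc 0 t y N \<le> 2^N" using gridc_le[of t 0 y N] t y by simp
    note [measurable] = Apast_meas[OF cle]
    show ?thesis using t y by measurable
  qed
  then show ?thesis unfolding eq by auto
qed

lemma fut_le_meas:
  assumes t: "0 \<le> t" and d: "0 < \<delta>" and y: "t \<le> y" "y < t + \<delta>"
  shows "{\<omega> \<in> space M. i \<le> A y \<omega> - A t \<omega>} \<in> sets (MF t \<delta>)"
proof -
  have eq: "{\<omega> \<in> space M. i \<le> A y \<omega> - A t \<omega>} = (\<Inter>N. {\<omega> \<in> space (MF t \<delta>). i \<le> A (t + \<delta> * real (gridc t \<delta> y N) / 2^N) \<omega> - A t \<omega>})"
  proof (intro set_eqI iffI)
    fix \<omega> assume "\<omega> \<in> {\<omega> \<in> space M. i \<le> A y \<omega> - A t \<omega>}"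
    then have w: "\<omega> \<in> space M" and i0: "i \<le> A y \<omega> - A t \<omega>" by auto
    have "A t \<omega> \<le> A y \<omega>" using A_mono[OF w t y(1)] .
    then have i: "A t \<omega> + i \<le> A y \<omega>" using i0 by arith
    then have "\<forall>N. A t \<omega> + i \<le> A (t + \<delta> * real (gridc t \<delta> y N) / 2^N) \<omega>"
      using grid_approx[OF w t d y] by blast
    then show "\<omega> \<in> (\<Inter>N. {\<omega> \<in> space (MF t \<delta>). i \<le> A (t + \<delta> * real (gridc t \<delta> y N) / 2^N) \<omega> - A t \<omega>})"
      using w by (auto intro: natfact)
  next
    fix \<omega> assume "\<omega> \<in> (\<Inter>N. {\<omega> \<in> space (MF t \<delta>). i \<le> A (t + \<delta> * real (gridc t \<delta> y N) / 2^N) \<omega> - A t \<omega>})"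
    then have w: "\<omega> \<in> space M" and all: "\<forall>N. i \<le> A (t + \<delta> * real (gridc t \<delta> y N) / 2^N) \<omega> - A t \<omega>" by auto
    have "\<forall>N. A t \<omega> + i \<le> A (t + \<delta> * real (gridc t \<delta> y N) / 2^N) \<omega>"
    proof
      fix N
      have "A t \<omega> \<le> A (t + \<delta> * real (gridc t \<delta> y N) / 2^N) \<omega>"
        using A_mono[OF w t] d by simp
      then show "A t \<omega> + i \<le> A (t + \<delta> * real (gridc t \<delta> y N) / 2^N) \<omega>" using all[rule_format, of N] by linarith
    qed
    then have "A t \<omega> + i \<le> A y \<omega>" using grid_approx[OF w t d y] by blast
    then show "\<omega> \<in> {\<omega> \<in> space M. i \<le> A y \<omega> - A t \<omega>}" using w by auto
  qed
  have "{\<omega> \<in> space (MF t \<delta>). i \<le> A (t + \<delta> * real (gridc t \<delta> y N) / 2^N) \<omega> - A t \<omega>} \<in> sets (MF t \<delta>)" for N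
  proof -
    have cle: "gridc t \<delta> y N \<le> 2^N" using gridc_le[of \<delta> t y N] d y by simp
    note [measurable] = Afut_meas[OF cle]
    show ?thesis using d y by measurable
  qed
  then show ?thesis unfolding eq by auto
qed

end

context qm
begin

definition phi :: "real \<Rightarrow> nat \<Rightarrow> 'a \<Rightarrow> real" where
  "phi t k \<omega> = (if k \<le> A t \<omega> then arrival_time A k \<omega> else 0)"
definition psi :: "real \<Rightarrow> real \<Rightarrow> nat \<Rightarrow> 'a \<Rightarrow> real" where
  "psi t \<delta> i \<omega> = (if 0 < i \<and> i \<le> A (t + \<delta>) \<omega> - A t \<omega> then arrival_time A (A t \<omega> + i) \<omega> else 0)"

lemma phi_meas:
  assumes t: "0 < t"
  shows "phi t k \<in> borel_measurable (MP t)"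
proof (rule borel_measurableI_le)
  fix y :: real
  define Kt where "Kt = {\<omega> \<in> space M. k \<le> A t \<omega>}"
  define Cy where "Cy = (if y < 0 then {} else if t \<le> y then space M else {\<omega> \<in> space M. k \<le> A y \<omega>})"
  have KtM: "Kt \<in> sets (MP t)"
  proof -
    note [measurable] = At_meas_MP[of t]
    have "{\<omega> \<in> space (MP t). k \<le> A t \<omega>} \<in> sets (MP t)" by measurable
    then show ?thesis by (simp add: Kt_def)
  qed
  have CyM: "Cy \<in> sets (MP t)"
    unfolding Cy_def using past_le_meas[OF t, of y k] sets.top[of "MP t"] by auto
  have "{\<omega> \<in> space (MP t). phi t k \<omega> \<le> y} = (Kt \<inter> Cy) \<union> ((space M - Kt) \<inter> (if 0 \<le> y then space M else {}))"
  proof (intro set_eqI)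
    fix \<omega>
    show "\<omega> \<in> {\<omega> \<in> space (MP t). phi t k \<omega> \<le> y} \<longleftrightarrow> \<omega> \<in> (Kt \<inter> Cy) \<union> ((space M - Kt) \<inter> (if 0 \<le> y then space M else {}))"
    proof (cases "\<omega> \<in> space M \<and> k \<le> A t \<omega>")
      case True
      then have w: "\<omega> \<in> space M" and kt: "k \<le> A t \<omega>" by auto
      have iff: "arrival_time A k \<omega> \<le> y \<longleftrightarrow> 0 \<le> y \<and> k \<le> A y \<omega>"
        using tau_le_iff[OF w _ kt] t by simp
      have ty: "t \<le> y \<Longrightarrow> k \<le> A y \<omega>" using A_mono[OF w, of t y] t kt by simp
      have phiv: "phi t k \<omega> = arrival_time A k \<omega>" using kt by (simp add: phi_def)
      have Cyiff: "\<omega> \<in> Cy \<longleftrightarrow> (0 \<le> y \<and> k \<le> A y \<omega>)"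
        using ty w by (auto simp: Cy_def)
      have "\<omega> \<in> Kt" using w kt by (simp add: Kt_def)
      then show ?thesis using w phiv iff Cyiff by simp
    next
      case False
      then have "phi t k \<omega> = 0 \<or> \<omega> \<notin> space M" by (auto simp: phi_def)
      then show ?thesis using False by (auto simp: Kt_def Cy_def)
    qed
  qed
  also have "\<dots> \<in> sets (MP t)"
  proof -
    have "space M - Kt \<in> sets (MP t)" using sets.compl_sets[OF KtM] by simp
    then show ?thesis using KtM CyM sets.top[of "MP t"] by (auto split: if_splits)
  qed
  finally show "{\<omega> \<in> space (MP t). phi t k \<omega> \<le> y} \<in> sets (MP t)" .
qed

lemma psi_meas:
  assumes t: "0 \<le> t" and d: "0 < \<delta>"
  shows "psi t \<delta> i \<in> borel_measurable (MF t \<delta>)"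
proof (rule borel_measurableI_le)
  fix y :: real
  define C where "C = {\<omega> \<in> space M. 0 < i \<and> i \<le> A (t + \<delta>) \<omega> - A t \<omega>}"
  define Dy where "Dy = (if y < t then {} else if t + \<delta> \<le> y then space M else {\<omega> \<in> space M. i \<le> A y \<omega> - A t \<omega>})"
  have CM: "C \<in> sets (MF t \<delta>)"
  proof -
    have S: "(\<lambda>\<omega>. A (t + \<delta>) \<omega> - A t \<omega>) -` {i..} \<inter> space (MF t \<delta>) \<in> sets (MF t \<delta>)"
      by (rule measurable_sets[OF D_meas_MF]) simp
    have "C = (if 0 < i then (\<lambda>\<omega>. A (t + \<delta>) \<omega> - A t \<omega>) -` {i..} \<inter> space (MF t \<delta>) else {})"
      by (auto simp: C_def)
    then show ?thesis using S by simp
  qed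
  have DyM: "Dy \<in> sets (MF t \<delta>)"
  proof -
    consider "y < t" | "t + \<delta> \<le> y" | "t \<le> y" "y < t + \<delta>" by linarith
    then show ?thesis
    proof cases
      case 1 then show ?thesis by (simp add: Dy_def)
    next
      case 2
      have "space M \<in> sets (MF t \<delta>)" using sets.top[of "MF t \<delta>"] by simp
      then show ?thesis using 2 by (simp add: Dy_def)
    next
      case 3 then show ?thesis using fut_le_meas[OF t d 3] by (simp add: Dy_def)
    qed
  qed
  have "{\<omega> \<in> space (MF t \<delta>). psi t \<delta> i \<omega> \<le> y} = (C \<inter> Dy) \<union> ((space M - C) \<inter> (if 0 \<le> y then space M else {}))"
  proof (intro set_eqI)
    fix \<omega>
    show "\<omega> \<in> {\<omega> \<in> space (MF t \<delta>). psi t \<delta> i \<omega> \<le> y} \<longleftrightarrow> \<omega> \<in> (C \<inter> Dy) \<union> ((space M - C) \<inter> (if 0 \<le> y then space M else {}))"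
    proof (cases "\<omega> \<in> C")
      case True
      then have w: "\<omega> \<in> space M" and i: "0 < i" "i \<le> A (t + \<delta>) \<omega> - A t \<omega>" by (auto simp: C_def)
      have tt: "A t \<omega> \<le> A (t + \<delta>) \<omega>" using A_mono[OF w t] d by simp
      have k: "A t \<omega> + i \<le> A (t + \<delta>) \<omega>" using i tt by arith
      have iff: "arrival_time A (A t \<omega> + i) \<omega> \<le> y \<longleftrightarrow> 0 \<le> y \<and> A t \<omega> + i \<le> A y \<omega>"
        using tau_le_iff[OF w _ k] t d by simp
      have c1: "\<not> (0 \<le> y \<and> A t \<omega> + i \<le> A y \<omega>)" if "y < t"
      proof
        assume h: "0 \<le> y \<and> A t \<omega> + i \<le> A y \<omega>"
        then have "A y \<omega> \<le> A t \<omega>" using A_mono[OF w, of y t] that by simp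
        then show False using h i by linarith
      qed
      have c2: "0 \<le> y \<and> A t \<omega> + i \<le> A y \<omega>" if "t + \<delta> \<le> y"
      proof -
        have td0: "0 \<le> t + \<delta>" using t d by simp
        have "A (t + \<delta>) \<omega> \<le> A y \<omega>" using A_mono[OF w td0 that] .
        moreover have "0 \<le> y" using that td0 by linarith
        ultimately show ?thesis using k by linarith
      qed
      have c3: "(0 \<le> y \<and> A t \<omega> + i \<le> A y \<omega>) \<longleftrightarrow> i \<le> A y \<omega> - A t \<omega>" if "t \<le> y"
      proof -
        have m: "A t \<omega> \<le> A y \<omega>" using A_mono[OF w t that] .
        have y0: "0 \<le> y" using that t by linarith
        have "(A t \<omega> + i \<le> A y \<omega>) \<longleftrightarrow> i \<le> A y \<omega> - A t \<omega>" using m by arith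
        then show ?thesis using y0 by simp
      qed
      have psiv: "psi t \<delta> i \<omega> = arrival_time A (A t \<omega> + i) \<omega>" using i by (simp add: psi_def)
      have Dyiff: "\<omega> \<in> Dy \<longleftrightarrow> (0 \<le> y \<and> A t \<omega> + i \<le> A y \<omega>)"
      proof -
        consider "y < t" | "t + \<delta> \<le> y" | "t \<le> y" "y < t + \<delta>" by linarith
        then show ?thesis
        proof cases
          case 1 then show ?thesis using c1 by (simp add: Dy_def)
        next
          case 2 then show ?thesis using c2 w d t by (simp add: Dy_def)
        next
          case 3 then show ?thesis using c3 w by (simp add: Dy_def)
        qed
      qed
      show ?thesis using True psiv iff Dyiff w by simp
    next
      case False
      then have "psi t \<delta> i \<omega> = 0 \<or> \<omega> \<notin> space M" by (auto simp: psi_def C_def)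
      then show ?thesis using False by (auto simp: C_def)
    qed
  qed
  also have "\<dots> \<in> sets (MF t \<delta>)"
  proof -
    have "space M - C \<in> sets (MF t \<delta>)" using sets.compl_sets[OF CM] by simp
    then show ?thesis using CM DyM sets.top[of "MF t \<delta>"] by (auto split: if_splits)
  qed
  finally show "{\<omega> \<in> space (MF t \<delta>). psi t \<delta> i \<omega> \<le> y} \<in> sets (MF t \<delta>)" .
qed

end

context qm
begin

definition UU :: "real \<Rightarrow> (real \<Rightarrow> ennreal) \<Rightarrow> 'a \<Rightarrow> ennreal" where
  "UU t F \<omega> = (\<Sum>k. if 1 \<le> k \<and> k \<le> A t \<omega> then F (arrival_time A k \<omega>) else 0)"
definition VV :: "real \<Rightarrow> real \<Rightarrow> (real \<Rightarrow> ennreal) \<Rightarrow> 'a \<Rightarrow> ennreal" where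
  "VV t \<delta> G \<omega> = (\<Sum>k. if 1 \<le> k \<and> A t \<omega> < k \<and> k \<le> A (t + \<delta>) \<omega> then G (arrival_time A k \<omega>) else 0)"

lemma UU_meas_MP:
  assumes t: "0 < t" and F: "F \<in> borel_measurable borel"
  shows "UU t F \<in> borel_measurable (MP t)"
proof -
  note [measurable] = At_meas_MP[of t] phi_meas[OF t] F
  have "(\<lambda>\<omega>. \<Sum>k. if 1 \<le> k \<and> k \<le> A t \<omega> then F (phi t k \<omega>) else 0) \<in> borel_measurable (MP t)"
    by measurable
  moreover have "\<And>\<omega>. \<omega> \<in> space (MP t) \<Longrightarrow> (\<Sum>k. if 1 \<le> k \<and> k \<le> A t \<omega> then F (phi t k \<omega>) else 0) = UU t F \<omega>"
    unfolding UU_def by (intro arg_cong[where f=suminf] ext) (auto simp: phi_def)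
  ultimately show ?thesis by (rule measurable_cong[THEN iffD1, rotated])
qed

lemma VV_meas_MF:
  assumes t: "0 \<le> t" and d: "0 < \<delta>" and G: "G \<in> borel_measurable borel"
  shows "VV t \<delta> G \<in> borel_measurable (MF t \<delta>)"
proof -
  note [measurable] = D_meas_MF[of t \<delta>] psi_meas[OF t d] G
  have "(\<lambda>\<omega>. \<Sum>i. if 0 < i \<and> i \<le> A (t + \<delta>) \<omega> - A t \<omega> then G (psi t \<delta> i \<omega>) else 0) \<in> borel_measurable (MF t \<delta>)"
    by measurable
  moreover have "(\<Sum>i. if 0 < i \<and> i \<le> A (t + \<delta>) \<omega> - A t \<omega> then G (psi t \<delta> i \<omega>) else 0) = VV t \<delta> G \<omega>"
    if w: "\<omega> \<in> space (MF t \<delta>)" for \<omega>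
  proof -
    have w': "\<omega> \<in> space M" using w by simp
    define a where "a = A t \<omega>"
    define b where "b = A (t + \<delta>) \<omega>"
    have ab: "a \<le> b" using A_mono[OF w' t] d by (simp add: a_def b_def)
    have "(\<Sum>i. if 0 < i \<and> i \<le> A (t + \<delta>) \<omega> - A t \<omega> then G (psi t \<delta> i \<omega>) else 0) =
        (\<Sum>i\<in>{1..b - a}. G (arrival_time A (i + a) \<omega>))"
    proof -
      have "(\<Sum>i. if 0 < i \<and> i \<le> A (t + \<delta>) \<omega> - A t \<omega> then G (psi t \<delta> i \<omega>) else 0) =
          (\<Sum>i\<in>{1..b - a}. if 0 < i \<and> i \<le> A (t + \<delta>) \<omega> - A t \<omega> then G (psi t \<delta> i \<omega>) else 0)"
        by (rule suminf_finite) (auto simp: a_def b_def)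
      also have "\<dots> = (\<Sum>i\<in>{1..b - a}. G (arrival_time A (i + a) \<omega>))"
        by (rule sum.cong) (auto simp: a_def b_def psi_def add.commute)
      finally show ?thesis .
    qed
    also have "\<dots> = (\<Sum>k\<in>{1 + a..(b - a) + a}. G (arrival_time A k \<omega>))"
      by (rule sum.shift_bounds_cl_nat_ivl[symmetric])
    also have "\<dots> = (\<Sum>k\<in>{Suc a..b}. G (arrival_time A k \<omega>))" using ab by simp
    also have "\<dots> = VV t \<delta> G \<omega>"
    proof -
      have "VV t \<delta> G \<omega> = (\<Sum>k\<in>{Suc a..b}. if 1 \<le> k \<and> A t \<omega> < k \<and> k \<le> A (t + \<delta>) \<omega> then G (arrival_time A k \<omega>) else 0)"
        unfolding VV_def by (rule suminf_finite) (auto simp: a_def b_def)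
      also have "\<dots> = (\<Sum>k\<in>{Suc a..b}. G (arrival_time A k \<omega>))"
        by (rule sum.cong) (auto simp: a_def b_def)
      finally show ?thesis ..
    qed
    finally show ?thesis .
  qed
  ultimately show ?thesis by (rule measurable_cong[THEN iffD1, rotated])
qed

lemma sets_MP_M: "0 \<le> t \<Longrightarrow> sets (MP t) \<subseteq> sets M"
  unfolding sets_MP PU_def using sets.sigma_sets_subset[OF GP_sets]
  by (intro sets.sigma_sets_subset) blast
lemma sets_MF_M: "0 \<le> t \<Longrightarrow> 0 \<le> \<delta> \<Longrightarrow> sets (MF t \<delta>) \<subseteq> sets M"
  unfolding sets_MF FU_def using sets.sigma_sets_subset[OF GF_sets]
  by (intro sets.sigma_sets_subset) blast

lemma UV_prod:
  assumes t: "0 \<le> t" and d: "0 \<le> \<delta>" and F: "F \<in> borel_measurable borel" and G: "G \<in> borel_measurable borel"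
  shows "(\<integral>\<^sup>+\<omega>. UU t F \<omega> * VV t \<delta> G \<omega> \<partial>M) = (\<integral>\<^sup>+\<omega>. UU t F \<omega> \<partial>M) * (\<integral>\<^sup>+\<omega>. VV t \<delta> G \<omega> \<partial>M)"
proof (cases "t = 0 \<or> \<delta> = 0")
  case True
  then show ?thesis
  proof
    assume t0: "t = 0"
    have "UU t F \<omega> = 0" if "\<omega> \<in> space M" for \<omega>
    proof -
      have "(\<lambda>k. if 1 \<le> k \<and> k \<le> A t \<omega> then F (arrival_time A k \<omega>) else 0) = (\<lambda>_. 0)"
        using A_0[OF that] t0 by (auto simp: fun_eq_iff)
      then show ?thesis by (simp add: UU_def)
    qed
    then have "(\<integral>\<^sup>+\<omega>. UU t F \<omega> * VV t \<delta> G \<omega> \<partial>M) = 0" "(\<integral>\<^sup>+\<omega>. UU t F \<omega> \<partial>M) = 0"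
      by (simp_all cong: nn_integral_cong)
    then show ?thesis by simp
  next
    assume d0: "\<delta> = 0"
    have "VV t \<delta> G \<omega> = 0" for \<omega>
    proof -
      have "(\<lambda>k. if 1 \<le> k \<and> A t \<omega> < k \<and> k \<le> A (t + \<delta>) \<omega> then G (arrival_time A k \<omega>) else 0) = (\<lambda>_. 0)"
        using d0 by (auto simp: fun_eq_iff)
      then show ?thesis by (simp add: VV_def)
    qed
    then show ?thesis by simp
  qed
next
  case False
  then have t': "0 < t" and d': "0 < \<delta>" using t d by auto
  have Um: "UU t F \<in> borel_measurable (MP t)" by (rule UU_meas_MP[OF t' F])
  have Vm: "VV t \<delta> G \<in> borel_measurable (MF t \<delta>)" by (rule VV_meas_MF[OF t d' G])
  have UmM: "UU t F \<in> borel_measurable M" by (rule meas_sub[OF Um]) (use sets_MP_M[OF t] in auto)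
  have VmM: "VV t \<delta> G \<in> borel_measurable M" by (rule meas_sub[OF Vm]) (use sets_MF_M[OF t d] in auto)
  have h: "(\<lambda>p. UU t F (fst p) * VV t \<delta> G (snd p)) \<in> borel_measurable (MP t \<Otimes>\<^sub>M MF t \<delta>)"
    using Um Vm by measurable
  have "(\<integral>\<^sup>+\<omega>. UU t F \<omega> * VV t \<delta> G \<omega> \<partial>M) = (\<integral>\<^sup>+\<omega>1. (\<integral>\<^sup>+\<omega>2. UU t F \<omega>1 * VV t \<delta> G \<omega>2 \<partial>M) \<partial>M)"
    using indep_subalg_nn_integral[OF space_MP sets_MP_M[OF t] space_MF sets_MF_M[OF t d] indep_PF[OF t' d'] h]
    by simp
  also have "\<dots> = (\<integral>\<^sup>+\<omega>1. UU t F \<omega>1 * (\<integral>\<^sup>+\<omega>2. VV t \<delta> G \<omega>2 \<partial>M) \<partial>M)"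
    by (intro nn_integral_cong nn_integral_cmult VmM)
  also have "\<dots> = (\<integral>\<^sup>+\<omega>. UU t F \<omega> \<partial>M) * (\<integral>\<^sup>+\<omega>. VV t \<delta> G \<omega> \<partial>M)"
    by (rule nn_integral_multc[OF UmM])
  finally show ?thesis .
qed

end

lemma sum_j: "(\<Sum>j. if 1 \<le> j \<and> j \<le> b then c else 0) = of_nat b * (c::ennreal)"
proof -
  have "(\<Sum>j. if 1 \<le> j \<and> j \<le> b then c else 0) = (\<Sum>j\<in>{1..b}. if 1 \<le> j \<and> j \<le> b then c else 0)"
    by (rule suminf_finite) auto
  also have "\<dots> = (\<Sum>j\<in>{1..b}. c)" by (rule sum.cong) auto
  finally show ?thesis by simp
qed

lemma nn_integral_prod_suminf1:
  fixes f g :: "nat \<Rightarrow> 'a \<Rightarrow> ennreal"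
  assumes f: "\<And>k. f k \<in> borel_measurable M" and g: "\<And>k. g k \<in> borel_measurable M"
  shows "(\<integral>\<^sup>+\<omega>. (\<Sum>k. f k \<omega>) * (\<Sum>k. g k \<omega>) \<partial>M) = (\<Sum>k. \<Sum>k'. \<integral>\<^sup>+\<omega>. f k \<omega> * g k' \<omega> \<partial>M)"
proof -
  have "(\<integral>\<^sup>+\<omega>. (\<Sum>k. f k \<omega>) * (\<Sum>k. g k \<omega>) \<partial>M) = (\<integral>\<^sup>+\<omega>. (\<Sum>k. \<Sum>k'. f k \<omega> * g k' \<omega>) \<partial>M)"
  proof (rule nn_integral_cong)
    fix \<omega>
    have "(\<Sum>k. f k \<omega>) * (\<Sum>k. g k \<omega>) = (\<Sum>k. f k \<omega> * (\<Sum>k. g k \<omega>))" by (rule ennreal_suminf_multc[symmetric])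
    also have "\<dots> = (\<Sum>k. \<Sum>k'. f k \<omega> * g k' \<omega>)" by (simp only: ennreal_suminf_cmult)
    finally show "(\<Sum>k. f k \<omega>) * (\<Sum>k. g k \<omega>) = (\<Sum>k. \<Sum>k'. f k \<omega> * g k' \<omega>)" .
  qed
  also have "\<dots> = (\<Sum>k. \<Sum>k'. \<integral>\<^sup>+\<omega>. f k \<omega> * g k' \<omega> \<partial>M)"
    by (rule nn_integral_sum2) (use f g in measurable)
  finally show ?thesis .
qed

context qm
begin

definition XB :: "real \<Rightarrow> nat \<Rightarrow> 'a \<Rightarrow> ennreal" where
  "XB t k \<omega> = (if 1 \<le> k \<and> k \<le> A t \<omega> then of_nat (B k \<omega>) * ennreal (exp (- (t - arrival_time A k \<omega>) * mu)) else 0)"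
definition YB :: "real \<Rightarrow> real \<Rightarrow> nat \<Rightarrow> 'a \<Rightarrow> ennreal" where
  "YB t \<delta> k \<omega> = (if 1 \<le> k \<and> A t \<omega> < k \<and> k \<le> A (t + \<delta>) \<omega> then of_nat (B k \<omega>) * ennreal (exp (- (t + \<delta> - arrival_time A k \<omega>) * mu)) else 0)"

lemma X_sum: "(\<Sum>j. X t k j \<omega>) = XB t k \<omega>"
proof (cases "1 \<le> k \<and> k \<le> A t \<omega>")
  case True
  then have "(\<lambda>j. X t k j \<omega>) = (\<lambda>j. if 1 \<le> j \<and> j \<le> B k \<omega> then ennreal (exp (- (t - arrival_time A k \<omega>) * mu)) else 0)"
    by (auto simp: X_def fun_eq_iff)
  then have "(\<Sum>j. X t k j \<omega>) = (\<Sum>j. if 1 \<le> j \<and> j \<le> B k \<omega> then ennreal (exp (- (t - arrival_time A k \<omega>) * mu)) else 0)" by (simp only:)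
  also have "\<dots> = of_nat (B k \<omega>) * ennreal (exp (- (t - arrival_time A k \<omega>) * mu))" by (rule sum_j)
  finally show ?thesis using True by (simp add: XB_def)
next
  case False
  then have "(\<lambda>j. X t k j \<omega>) = (\<lambda>_. 0)" by (auto simp: X_def fun_eq_iff)
  then show ?thesis using False by (auto simp: XB_def)
qed

lemma Y_sum: "(\<Sum>j. Y t \<delta> k j \<omega>) = YB t \<delta> k \<omega>"
proof (cases "1 \<le> k \<and> A t \<omega> < k \<and> k \<le> A (t + \<delta>) \<omega>")
  case True
  then have "(\<lambda>j. Y t \<delta> k j \<omega>) = (\<lambda>j. if 1 \<le> j \<and> j \<le> B k \<omega> then ennreal (exp (- (t + \<delta> - arrival_time A k \<omega>) * mu)) else 0)"
    by (auto simp: Y_def fun_eq_iff)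
  then have "(\<Sum>j. Y t \<delta> k j \<omega>) = (\<Sum>j. if 1 \<le> j \<and> j \<le> B k \<omega> then ennreal (exp (- (t + \<delta> - arrival_time A k \<omega>) * mu)) else 0)" by (simp only:)
  also have "\<dots> = of_nat (B k \<omega>) * ennreal (exp (- (t + \<delta> - arrival_time A k \<omega>) * mu))" by (rule sum_j)
  finally show ?thesis using True by (simp add: YB_def)
next
  case False
  then have "(\<lambda>j. Y t \<delta> k j \<omega>) = (\<lambda>_. 0)" by (auto simp: Y_def fun_eq_iff)
  then show ?thesis using False by (auto simp: YB_def)
qed

lemma Ind_X:
  assumes t: "0 \<le> t"
  shows "(\<integral>\<^sup>+\<omega>. Ind t k j \<omega> \<partial>M) = (\<integral>\<^sup>+\<omega>. X t k j \<omega> \<partial>M)"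
proof (cases "1 \<le> k \<and> 1 \<le> j")
  case False
  then have "Ind t k j = (\<lambda>_. 0)" "X t k j = (\<lambda>_. 0)" by (auto simp: Ind_def X_def fun_eq_iff)
  then show ?thesis by simp
next
  case True
  have w: "Work k j \<in> II" using True by (intro Work_II) auto
  define Z :: "'a \<Rightarrow> ennreal" where "Z \<omega> = (if k \<le> A t \<omega> \<and> j \<le> B k \<omega> then 1 else 0)" for \<omega>
  have Zm: "Z \<in> borel_measurable (HH k j)"
  proof -
    have k1: "1 \<le> k" using True by simp
    show ?thesis unfolding Z_def using A_meas_HH[OF t] B_meas_HH[OF k1] by measurable
  qed
  have "(\<integral>\<^sup>+\<omega>. Ind t k j \<omega> \<partial>M) = (\<integral>\<^sup>+\<omega>. Z \<omega> * (if t < arrival_time A k \<omega> + S k j \<omega> then 1 else 0) \<partial>M)"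
    using True by (intro nn_integral_cong) (auto simp: Ind_def Z_def)
  also have "\<dots> = (\<integral>\<^sup>+\<omega>. Z \<omega> * ennreal (exp (- (t - arrival_time A k \<omega>) * mu)) \<partial>M)"
  proof (rule T1[OF w Zm])
    fix \<omega> assume "\<omega> \<in> space M" "Z \<omega> \<noteq> 0"
    then show "arrival_time A k \<omega> \<le> t" using tau_le[of \<omega> t k] t by (auto simp: Z_def split: if_splits)
  qed
  also have "\<dots> = (\<integral>\<^sup>+\<omega>. X t k j \<omega> \<partial>M)"
    using True by (intro nn_integral_cong) (auto simp: X_def Z_def)
  finally show ?thesis .
qed

lemma New_Y:
  assumes t: "0 \<le> t" and d: "0 \<le> \<delta>"
  shows "(\<integral>\<^sup>+\<omega>. New t \<delta> k j \<omega> \<partial>M) = (\<integral>\<^sup>+\<omega>. Y t \<delta> k j \<omega> \<partial>M)"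
proof (cases "1 \<le> k \<and> 1 \<le> j")
  case False
  then have "New t \<delta> k j = (\<lambda>_. 0)" "Y t \<delta> k j = (\<lambda>_. 0)" by (auto simp: New_def Ind_def Y_def fun_eq_iff)
  then show ?thesis by simp
next
  case True
  have w: "Work k j \<in> II" using True by (intro Work_II) auto
  have td: "0 \<le> t + \<delta>" using t d by simp
  define Z :: "'a \<Rightarrow> ennreal" where "Z \<omega> = (if A t \<omega> < k \<and> k \<le> A (t + \<delta>) \<omega> \<and> j \<le> B k \<omega> then 1 else 0)" for \<omega>
  have Zm: "Z \<in> borel_measurable (HH k j)"
  proof -
    have k1: "1 \<le> k" using True by simp
    show ?thesis unfolding Z_def using A_meas_HH[OF t] A_meas_HH[OF td] B_meas_HH[OF k1] by measurable
  qed
  have "(\<integral>\<^sup>+\<omega>. New t \<delta> k j \<omega> \<partial>M) = (\<integral>\<^sup>+\<omega>. Z \<omega> * (if t + \<delta> < arrival_time A k \<omega> + S k j \<omega> then 1 else 0) \<partial>M)"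
    using True by (intro nn_integral_cong) (auto simp: New_def Ind_def Z_def)
  also have "\<dots> = (\<integral>\<^sup>+\<omega>. Z \<omega> * ennreal (exp (- (t + \<delta> - arrival_time A k \<omega>) * mu)) \<partial>M)"
  proof (rule T1[OF w Zm])
    fix \<omega> assume "\<omega> \<in> space M" "Z \<omega> \<noteq> 0"
    then show "arrival_time A k \<omega> \<le> t + \<delta>" using tau_le[of \<omega> "t + \<delta>" k] td by (auto simp: Z_def split: if_splits)
  qed
  also have "\<dots> = (\<integral>\<^sup>+\<omega>. Y t \<delta> k j \<omega> \<partial>M)"
    using True by (intro nn_integral_cong) (auto simp: Y_def Z_def)
  finally show ?thesis .
qed

end

context qm
begin

definition Ft :: "real \<Rightarrow> real \<Rightarrow> ennreal" where
  "Ft t s = mB s * ennreal (exp (- (t - s) * mu))"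
definition UUt :: "real \<Rightarrow> nat \<Rightarrow> 'a \<Rightarrow> ennreal" where
  "UUt t k \<omega> = (if 1 \<le> k \<and> k \<le> A t \<omega> then Ft t (arrival_time A k \<omega>) else 0)"
definition VVt :: "real \<Rightarrow> real \<Rightarrow> nat \<Rightarrow> 'a \<Rightarrow> ennreal" where
  "VVt t \<delta> k \<omega> = (if 1 \<le> k \<and> A t \<omega> < k \<and> k \<le> A (t + \<delta>) \<omega> then Ft (t + \<delta>) (arrival_time A k \<omega>) else 0)"

lemma Ft_meas: "Ft t \<in> borel_measurable borel"
  unfolding Ft_def using mB_meas by measurable

lemma UU_eq: "UU t (Ft t) \<omega> = (\<Sum>k. UUt t k \<omega>)" unfolding UU_def UUt_def ..
lemma VV_eq: "VV t \<delta> (Ft (t + \<delta>)) \<omega> = (\<Sum>k. VVt t \<delta> k \<omega>)" unfolding VV_def VVt_def ..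

lemma UUt_meas: "0 \<le> t \<Longrightarrow> UUt t k \<in> borel_measurable M"
  unfolding UUt_def using A_meas[of t] tau_meas[of k] Ft_meas[of t] by measurable
lemma VVt_meas: "0 \<le> t \<Longrightarrow> 0 \<le> \<delta> \<Longrightarrow> VVt t \<delta> k \<in> borel_measurable M"
proof -
  assume t: "0 \<le> t" and d: "0 \<le> \<delta>"
  have td: "0 \<le> t + \<delta>" using t d by simp
  show ?thesis unfolding VVt_def using A_meas[OF t] A_meas[OF td] tau_meas[of k] Ft_meas[of "t+\<delta>"] by measurable
qed

lemma X_meas: "0 \<le> t \<Longrightarrow> X t k j \<in> borel_measurable M"
proof (cases "1 \<le> k")
  case True
  assume t: "0 \<le> t"
  show ?thesis unfolding X_def using A_meas[OF t] B_meas[OF True] tau_meas[of k] by measurable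
next
  case False
  then have "X t k j = (\<lambda>_. 0)" by (auto simp: X_def fun_eq_iff)
  then show ?thesis by simp
qed

lemma Y_meas: "0 \<le> t \<Longrightarrow> 0 \<le> \<delta> \<Longrightarrow> Y t \<delta> k j \<in> borel_measurable M"
proof (cases "1 \<le> k")
  case True
  assume t: "0 \<le> t" and d: "0 \<le> \<delta>"
  have td: "0 \<le> t + \<delta>" using t d by simp
  show ?thesis unfolding Y_def using A_meas[OF t] A_meas[OF td] B_meas[OF True] tau_meas[of k] by measurable
next
  case False
  then have "Y t \<delta> k j = (\<lambda>_. 0)" by (auto simp: Y_def fun_eq_iff)
  then show ?thesis by simp
qed

lemma XB_meas: "0 \<le> t \<Longrightarrow> XB t k \<in> borel_measurable M"
proof -
  assume t: "0 \<le> t"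
  have "(\<lambda>\<omega>. \<Sum>j. X t k j \<omega>) \<in> borel_measurable M" using X_meas[OF t] by measurable
  then show ?thesis by (simp add: X_sum)
qed

lemma YB_meas: "0 \<le> t \<Longrightarrow> 0 \<le> \<delta> \<Longrightarrow> YB t \<delta> k \<in> borel_measurable M"
proof -
  assume t: "0 \<le> t" and d: "0 \<le> \<delta>"
  have "(\<lambda>\<omega>. \<Sum>j. Y t \<delta> k j \<omega>) \<in> borel_measurable M" using Y_meas[OF t d] by measurable
  then show ?thesis by (simp add: Y_sum)
qed

lemma XB_UUt:
  assumes t: "0 \<le> t"
  shows "(\<integral>\<^sup>+\<omega>. XB t k \<omega> \<partial>M) = (\<integral>\<^sup>+\<omega>. UUt t k \<omega> \<partial>M)"
proof (cases "1 \<le> k")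
  case False
  then have "XB t k = (\<lambda>_. 0)" "UUt t k = (\<lambda>_. 0)" by (auto simp: XB_def UUt_def fun_eq_iff)
  then show ?thesis by simp
next
  case True
  define h :: "'a \<Rightarrow> ennreal" where "h \<omega> = (if k \<le> A t \<omega> then ennreal (exp (- (t - arrival_time A k \<omega>) * mu)) else 0)" for \<omega>
  have hm: "h \<in> borel_measurable MA" unfolding h_def using A_meas_MA[OF t] tau_meas_MA[of k] by measurable
  have supp: "\<omega> \<in> RR k" if "\<omega> \<in> space M" "h \<omega> \<noteq> 0" for \<omega>
    using that t by (auto simp: h_def RR_def split: if_splits)
  have "(\<integral>\<^sup>+\<omega>. XB t k \<omega> \<partial>M) = (\<integral>\<^sup>+\<omega>. h \<omega> * of_nat (B k \<omega>) \<partial>M)"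
    using True by (intro nn_integral_cong) (auto simp: XB_def h_def mult.commute)
  also have "\<dots> = (\<integral>\<^sup>+\<omega>. h \<omega> * mB (arrival_time A k \<omega>) \<partial>M)"
    by (rule batch1[OF hm supp True]) auto
  also have "\<dots> = (\<integral>\<^sup>+\<omega>. UUt t k \<omega> \<partial>M)"
    using True by (intro nn_integral_cong) (auto simp: UUt_def h_def Ft_def mult.commute)
  finally show ?thesis .
qed

lemma YB_VVt:
  assumes t: "0 \<le> t" and d: "0 \<le> \<delta>"
  shows "(\<integral>\<^sup>+\<omega>. YB t \<delta> k \<omega> \<partial>M) = (\<integral>\<^sup>+\<omega>. VVt t \<delta> k \<omega> \<partial>M)"
proof (cases "1 \<le> k")
  case False
  then have "YB t \<delta> k = (\<lambda>_. 0)" "VVt t \<delta> k = (\<lambda>_. 0)" by (auto simp: YB_def VVt_def fun_eq_iff)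
  then show ?thesis by simp
next
  case True
  have td: "0 \<le> t + \<delta>" using t d by simp
  define h :: "'a \<Rightarrow> ennreal" where "h \<omega> = (if A t \<omega> < k \<and> k \<le> A (t + \<delta>) \<omega> then ennreal (exp (- (t + \<delta> - arrival_time A k \<omega>) * mu)) else 0)" for \<omega>
  have hm: "h \<in> borel_measurable MA" unfolding h_def using A_meas_MA[OF t] A_meas_MA[OF td] tau_meas_MA[of k] by measurable
  have supp: "\<omega> \<in> RR k" if "\<omega> \<in> space M" "h \<omega> \<noteq> 0" for \<omega>
    using that td by (auto simp: h_def RR_def split: if_splits)
  have "(\<integral>\<^sup>+\<omega>. YB t \<delta> k \<omega> \<partial>M) = (\<integral>\<^sup>+\<omega>. h \<omega> * of_nat (B k \<omega>) \<partial>M)"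
    using True by (intro nn_integral_cong) (auto simp: YB_def h_def mult.commute)
  also have "\<dots> = (\<integral>\<^sup>+\<omega>. h \<omega> * mB (arrival_time A k \<omega>) \<partial>M)"
    by (rule batch1[OF hm supp True]) auto
  also have "\<dots> = (\<integral>\<^sup>+\<omega>. VVt t \<delta> k \<omega> \<partial>M)"
    using True by (intro nn_integral_cong) (auto simp: VVt_def h_def Ft_def mult.commute)
  finally show ?thesis .
qed

lemma XBYB:
  assumes t: "0 \<le> t" and d: "0 \<le> \<delta>"
  shows "(\<integral>\<^sup>+\<omega>. XB t k \<omega> * YB t \<delta> k' \<omega> \<partial>M) = (\<integral>\<^sup>+\<omega>. UUt t k \<omega> * VVt t \<delta> k' \<omega> \<partial>M)"
proof (cases "1 \<le> k \<and> 1 \<le> k' \<and> k \<noteq> k'")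
  case False
  then have "(\<lambda>\<omega>. XB t k \<omega> * YB t \<delta> k' \<omega>) = (\<lambda>_. 0)" "(\<lambda>\<omega>. UUt t k \<omega> * VVt t \<delta> k' \<omega>) = (\<lambda>_. 0)"
    by (auto simp: XB_def YB_def UUt_def VVt_def fun_eq_iff)
  then show ?thesis by simp
next
  case True
  have td: "0 \<le> t + \<delta>" using t d by simp
  define h :: "'a \<Rightarrow> ennreal" where "h \<omega> = (if k \<le> A t \<omega> then ennreal (exp (- (t - arrival_time A k \<omega>) * mu)) else 0) *
     (if A t \<omega> < k' \<and> k' \<le> A (t + \<delta>) \<omega> then ennreal (exp (- (t + \<delta> - arrival_time A k' \<omega>) * mu)) else 0)" for \<omega>
  have hm: "h \<in> borel_measurable MA" unfolding h_def
    using A_meas_MA[OF t] A_meas_MA[OF td] tau_meas_MA[of k] tau_meas_MA[of k'] by measurable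
  have supp: "\<omega> \<in> RR (max k k')" if w: "\<omega> \<in> space M" and "h \<omega> \<noteq> 0" for \<omega>
  proof -
    have "k \<le> A t \<omega>" "k' \<le> A (t + \<delta>) \<omega>" using that by (auto simp: h_def split: if_splits)
    moreover have "A t \<omega> \<le> A (t + \<delta>) \<omega>" using A_mono[OF w t] d by simp
    ultimately show ?thesis using w td by (auto simp: RR_def)
  qed
  have "(\<integral>\<^sup>+\<omega>. XB t k \<omega> * YB t \<delta> k' \<omega> \<partial>M) = (\<integral>\<^sup>+\<omega>. h \<omega> * (of_nat (B k \<omega>) * of_nat (B k' \<omega>)) \<partial>M)"
    using True by (intro nn_integral_cong) (auto simp: XB_def YB_def h_def mult_ac)
  also have "\<dots> = (\<integral>\<^sup>+\<omega>. h \<omega> * (mB (arrival_time A k \<omega>) * mB (arrival_time A k' \<omega>)) \<partial>M)"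
    by (rule batch2[OF hm supp]) (use True in auto)
  also have "\<dots> = (\<integral>\<^sup>+\<omega>. UUt t k \<omega> * VVt t \<delta> k' \<omega> \<partial>M)"
    using True by (intro nn_integral_cong) (auto simp: UUt_def VVt_def h_def Ft_def mult_ac)
  finally show ?thesis .
qed

lemma E1:
  assumes t: "0 \<le> t"
  shows "(\<integral>\<^sup>+\<omega>. QQ t \<omega> \<partial>M) = (\<integral>\<^sup>+\<omega>. UU t (Ft t) \<omega> \<partial>M)"
proof -
  have "(\<integral>\<^sup>+\<omega>. QQ t \<omega> \<partial>M) = (\<Sum>k. \<Sum>j. \<integral>\<^sup>+\<omega>. Ind t k j \<omega> \<partial>M)"
    unfolding QQ_def by (rule nn_integral_sum2[OF Ind_meas[OF t]])
  also have "\<dots> = (\<Sum>k. \<Sum>j. \<integral>\<^sup>+\<omega>. X t k j \<omega> \<partial>M)" by (simp only: Ind_X[OF t])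
  also have "\<dots> = (\<Sum>k. \<integral>\<^sup>+\<omega>. (\<Sum>j. X t k j \<omega>) \<partial>M)"
    by (intro arg_cong[where f=suminf] ext nn_integral_suminf[symmetric] X_meas[OF t])
  also have "\<dots> = (\<Sum>k. \<integral>\<^sup>+\<omega>. UUt t k \<omega> \<partial>M)" by (simp only: X_sum XB_UUt[OF t])
  also have "\<dots> = (\<integral>\<^sup>+\<omega>. UU t (Ft t) \<omega> \<partial>M)"
    unfolding UU_eq by (rule nn_integral_suminf[symmetric]) (rule UUt_meas[OF t])
  finally show ?thesis .
qed

lemma E2:
  assumes t: "0 \<le> t" and d: "0 \<le> \<delta>"
  shows "(\<integral>\<^sup>+\<omega>. (\<Sum>k. \<Sum>j. New t \<delta> k j \<omega>) \<partial>M) = (\<integral>\<^sup>+\<omega>. VV t \<delta> (Ft (t + \<delta>)) \<omega> \<partial>M)"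
proof -
  have "(\<integral>\<^sup>+\<omega>. (\<Sum>k. \<Sum>j. New t \<delta> k j \<omega>) \<partial>M) = (\<Sum>k. \<Sum>j. \<integral>\<^sup>+\<omega>. New t \<delta> k j \<omega> \<partial>M)"
    by (rule nn_integral_sum2[OF New_meas[OF t d]])
  also have "\<dots> = (\<Sum>k. \<Sum>j. \<integral>\<^sup>+\<omega>. Y t \<delta> k j \<omega> \<partial>M)" by (simp only: New_Y[OF t d])
  also have "\<dots> = (\<Sum>k. \<integral>\<^sup>+\<omega>. (\<Sum>j. Y t \<delta> k j \<omega>) \<partial>M)"
    by (intro arg_cong[where f=suminf] ext nn_integral_suminf[symmetric] Y_meas[OF t d])
  also have "\<dots> = (\<Sum>k. \<integral>\<^sup>+\<omega>. VVt t \<delta> k \<omega> \<partial>M)" by (simp only: Y_sum YB_VVt[OF t d])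
  also have "\<dots> = (\<integral>\<^sup>+\<omega>. VV t \<delta> (Ft (t + \<delta>)) \<omega> \<partial>M)"
    unfolding VV_eq by (rule nn_integral_suminf[symmetric]) (rule VVt_meas[OF t d])
  finally show ?thesis .
qed

lemma E3:
  assumes t: "0 \<le> t" and d: "0 \<le> \<delta>"
  shows "(\<integral>\<^sup>+\<omega>. QQ t \<omega> * (\<Sum>k. \<Sum>j. New t \<delta> k j \<omega>) \<partial>M) =
    (\<integral>\<^sup>+\<omega>. UU t (Ft t) \<omega> * VV t \<delta> (Ft (t + \<delta>)) \<omega> \<partial>M)"
proof -
  have "(\<integral>\<^sup>+\<omega>. QQ t \<omega> * (\<Sum>k. \<Sum>j. New t \<delta> k j \<omega>) \<partial>M) =
    (\<integral>\<^sup>+\<omega>. (\<Sum>k. \<Sum>j. X t k j \<omega>) * (\<Sum>k. \<Sum>j. Y t \<delta> k j \<omega>) \<partial>M)" by (rule C3[OF t d])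
  also have "\<dots> = (\<integral>\<^sup>+\<omega>. (\<Sum>k. XB t k \<omega>) * (\<Sum>k. YB t \<delta> k \<omega>) \<partial>M)" by (simp only: X_sum Y_sum)
  also have "\<dots> = (\<Sum>k. \<Sum>k'. \<integral>\<^sup>+\<omega>. XB t k \<omega> * YB t \<delta> k' \<omega> \<partial>M)"
    by (rule nn_integral_prod_suminf1[OF XB_meas[OF t] YB_meas[OF t d]])
  also have "\<dots> = (\<Sum>k. \<Sum>k'. \<integral>\<^sup>+\<omega>. UUt t k \<omega> * VVt t \<delta> k' \<omega> \<partial>M)" by (simp only: XBYB[OF t d])
  also have "\<dots> = (\<integral>\<^sup>+\<omega>. (\<Sum>k. UUt t k \<omega>) * (\<Sum>k. VVt t \<delta> k \<omega>) \<partial>M)"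
    by (rule nn_integral_prod_suminf1[symmetric, OF UUt_meas[OF t] VVt_meas[OF t d]])
  also have "\<dots> = (\<integral>\<^sup>+\<omega>. UU t (Ft t) \<omega> * VV t \<delta> (Ft (t + \<delta>)) \<omega> \<partial>M)" by (simp only: UU_eq VV_eq)
  finally show ?thesis .
qed

end

lemma (in prob_space) cov_expand:
  fixes X Y :: "'a \<Rightarrow> real"
  assumes X: "integrable M X" and Y: "integrable M Y" and XY: "integrable M (\<lambda>\<omega>. X \<omega> * Y \<omega>)"
  shows "(LINT \<omega>|M. (X \<omega> - (LINT \<eta>|M. X \<eta>)) * (Y \<omega> - (LINT \<eta>|M. Y \<eta>))) =
         (LINT \<omega>|M. X \<omega> * Y \<omega>) - (LINT \<eta>|M. X \<eta>) * (LINT \<eta>|M. Y \<eta>)"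
proof -
  define a where "a = (LINT \<eta>|M. X \<eta>)"
  define b where "b = (LINT \<eta>|M. Y \<eta>)"
  have "(\<lambda>\<omega>. (X \<omega> - a) * (Y \<omega> - b)) = (\<lambda>\<omega>. (X \<omega> * Y \<omega> - b * X \<omega>) - (a * Y \<omega> - a * b))"
    by (auto simp: algebra_simps)
  then have "(LINT \<omega>|M. (X \<omega> - a) * (Y \<omega> - b)) = (LINT \<omega>|M. (X \<omega> * Y \<omega> - b * X \<omega>) - (a * Y \<omega> - a * b))"
    by simp
  also have "\<dots> = (LINT \<omega>|M. X \<omega> * Y \<omega> - b * X \<omega>) - (LINT \<omega>|M. a * Y \<omega> - a * b)"
    using X Y XY by (intro Bochner_Integration.integral_diff Bochner_Integration.integrable_diff integrable_mult_right integrable_const)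
  also have "(LINT \<omega>|M. X \<omega> * Y \<omega> - b * X \<omega>) = (LINT \<omega>|M. X \<omega> * Y \<omega>) - b * a"
    using X XY by (subst Bochner_Integration.integral_diff) (auto simp: a_def)
  also have "(LINT \<omega>|M. a * Y \<omega> - a * b) = a * b - a * b"
    using Y by (subst Bochner_Integration.integral_diff) (auto simp: b_def prob_space)
  finally show ?thesis unfolding a_def b_def by simp
qed

context qm
begin

lemma QQ_meas: "0 \<le> u \<Longrightarrow> QQ u \<in> borel_measurable M"
  unfolding QQ_def using Ind_meas[of u] by measurable

lemma QQ_eq: "\<omega> \<in> space M \<Longrightarrow> QQ u \<omega> = ennreal (real (queue_length A B S u \<omega>))"
  unfolding QQ_def by (rule Q_suminf[symmetric])

lemma ql_meas: "0 \<le> u \<Longrightarrow> (\<lambda>\<omega>. real (queue_length A B S u \<omega>)) \<in> borel_measurable M"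
proof -
  assume u: "0 \<le> u"
  have "(\<lambda>\<omega>. enn2real (QQ u \<omega>)) \<in> borel_measurable M" using QQ_meas[OF u] by measurable
  moreover have "\<And>\<omega>. \<omega> \<in> space M \<Longrightarrow> enn2real (QQ u \<omega>) = real (queue_length A B S u \<omega>)"
    by (simp add: QQ_eq)
  ultimately show ?thesis by (rule measurable_cong[THEN iffD1, rotated])
qed

lemma final:
  assumes t: "0 \<le> t" and d: "0 \<le> \<delta>"
    and sq_t: "integrable M (\<lambda>\<omega>. (real (queue_length A B S t \<omega>))\<^sup>2)"
    and sq_td: "integrable M (\<lambda>\<omega>. (real (queue_length A B S (t + \<delta>) \<omega>))\<^sup>2)"
  shows "covariance_of M (\<lambda>\<omega>. real (queue_length A B S t \<omega>)) (\<lambda>\<omega>. real (queue_length A B S (t + \<delta>) \<omega>))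
         = variance_of M (\<lambda>\<omega>. real (queue_length A B S t \<omega>)) * exp (- mu * \<delta>)"
proof -
  have td: "0 \<le> t + \<delta>" using t d by simp
  define Xr where "Xr \<omega> = real (queue_length A B S t \<omega>)" for \<omega>
  define Yr where "Yr \<omega> = real (queue_length A B S (t + \<delta>) \<omega>)" for \<omega>
  define \<rho> where "\<rho> = exp (- \<delta> * mu)"
  have \<rho>0: "0 \<le> \<rho>" by (simp add: \<rho>_def)
  have XM: "Xr \<in> borel_measurable M" unfolding Xr_def by (rule ql_meas[OF t])
  have YM: "Yr \<in> borel_measurable M" unfolding Yr_def by (rule ql_meas[OF td])
  have X0: "0 \<le> Xr \<omega>" "0 \<le> Yr \<omega>" for \<omega> by (simp_all add: Xr_def Yr_def)
  have sqX: "integrable M (\<lambda>\<omega>. Xr \<omega> ^ 2)" using sq_t by (simp add: Xr_def)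
  have sqY: "integrable M (\<lambda>\<omega>. Yr \<omega> ^ 2)" using sq_td by (simp add: Yr_def)
  have iX: "integrable M Xr" by (rule square_integrable_imp_integrable[OF XM sqX])
  have iY: "integrable M Yr" by (rule square_integrable_imp_integrable[OF YM sqY])
  have iXX: "integrable M (\<lambda>\<omega>. Xr \<omega> * Xr \<omega>)" using sqX by (simp add: power2_eq_square)
  have iXY: "integrable M (\<lambda>\<omega>. Xr \<omega> * Yr \<omega>)"
  proof (rule Bochner_Integration.integrable_bound[OF Bochner_Integration.integrable_add[OF sqX sqY]])
    show "(\<lambda>\<omega>. Xr \<omega> * Yr \<omega>) \<in> borel_measurable M" using XM YM by measurable
    show "AE x in M. norm (Xr x * Yr x) \<le> norm ((Xr x)\<^sup>2 + (Yr x)\<^sup>2)"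
    proof (rule AE_I2)
      fix x
      have "0 \<le> (Xr x - Yr x)\<^sup>2" by simp
      then have "2 * (Xr x * Yr x) \<le> (Xr x)\<^sup>2 + (Yr x)\<^sup>2" by (simp add: power2_diff)
      moreover have "0 \<le> Xr x * Yr x" using X0[of x] by simp
      ultimately have "Xr x * Yr x \<le> (Xr x)\<^sup>2 + (Yr x)\<^sup>2" by linarith
      then show "norm (Xr x * Yr x) \<le> norm ((Xr x)\<^sup>2 + (Yr x)\<^sup>2)" using X0[of x] by simp
    qed
  qed
  define Ea where "Ea = (LINT \<omega>|M. Xr \<omega>)"
  define Eb where "Eb = (LINT \<omega>|M. Yr \<omega>)"
  define Ec where "Ec = (LINT \<omega>|M. Xr \<omega> * Xr \<omega>)"
  define Ed where "Ed = (LINT \<omega>|M. Xr \<omega> * Yr \<omega>)"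
  have QX: "QQ t \<omega> = ennreal (Xr \<omega>)" if "\<omega> \<in> space M" for \<omega> using QQ_eq[OF that] by (simp add: Xr_def)
  have QY: "QQ (t + \<delta>) \<omega> = ennreal (Yr \<omega>)" if "\<omega> \<in> space M" for \<omega> using QQ_eq[OF that] by (simp add: Yr_def)
  have a: "(\<integral>\<^sup>+\<omega>. QQ t \<omega> \<partial>M) = ennreal Ea"
  proof -
    have "(\<integral>\<^sup>+\<omega>. QQ t \<omega> \<partial>M) = (\<integral>\<^sup>+\<omega>. ennreal (Xr \<omega>) \<partial>M)" by (rule nn_integral_cong) (simp add: QX)
    also have "\<dots> = ennreal Ea" unfolding Ea_def by (rule nn_integral_eq_integral[OF iX]) (simp add: X0)
    finally show ?thesis .
  qed
  have b: "(\<integral>\<^sup>+\<omega>. QQ (t + \<delta>) \<omega> \<partial>M) = ennreal Eb"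
  proof -
    have "(\<integral>\<^sup>+\<omega>. QQ (t + \<delta>) \<omega> \<partial>M) = (\<integral>\<^sup>+\<omega>. ennreal (Yr \<omega>) \<partial>M)" by (rule nn_integral_cong) (simp add: QY)
    also have "\<dots> = ennreal Eb" unfolding Eb_def by (rule nn_integral_eq_integral[OF iY]) (simp add: X0)
    finally show ?thesis .
  qed
  have c: "(\<integral>\<^sup>+\<omega>. QQ t \<omega> * QQ t \<omega> \<partial>M) = ennreal Ec"
  proof -
    have "(\<integral>\<^sup>+\<omega>. QQ t \<omega> * QQ t \<omega> \<partial>M) = (\<integral>\<^sup>+\<omega>. ennreal (Xr \<omega> * Xr \<omega>) \<partial>M)"
      by (rule nn_integral_cong) (simp add: QX X0 ennreal_mult')
    also have "\<dots> = ennreal Ec" unfolding Ec_def by (rule nn_integral_eq_integral[OF iXX]) (simp add: X0)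
    finally show ?thesis .
  qed
  have dd: "(\<integral>\<^sup>+\<omega>. QQ t \<omega> * QQ (t + \<delta>) \<omega> \<partial>M) = ennreal Ed"
  proof -
    have "(\<integral>\<^sup>+\<omega>. QQ t \<omega> * QQ (t + \<delta>) \<omega> \<partial>M) = (\<integral>\<^sup>+\<omega>. ennreal (Xr \<omega> * Yr \<omega>) \<partial>M)"
      by (rule nn_integral_cong) (simp add: QX QY X0 ennreal_mult')
    also have "\<dots> = ennreal Ed" unfolding Ed_def by (rule nn_integral_eq_integral[OF iXY]) (simp add: X0)
    finally show ?thesis .
  qed
  define OS where "OS \<omega> = (\<Sum>k. \<Sum>j. Old t \<delta> k j \<omega>)" for \<omega>
  define NS where "NS \<omega> = (\<Sum>k. \<Sum>j. New t \<delta> k j \<omega>)" for \<omega>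
  have OSm: "OS \<in> borel_measurable M" unfolding OS_def using Old_meas[OF t d] by measurable
  have NSm: "NS \<in> borel_measurable M" unfolding NS_def using New_meas[OF t d] by measurable
  have split: "QQ (t + \<delta>) \<omega> = OS \<omega> + NS \<omega>" if "\<omega> \<in> space M" for \<omega>
    unfolding OS_def NS_def by (rule QQ_split[OF that])
  define n where "n = (\<integral>\<^sup>+\<omega>. NS \<omega> \<partial>M)"
  have bsplit: "ennreal Eb = ennreal \<rho> * ennreal Ea + n"
  proof -
    have "ennreal Eb = (\<integral>\<^sup>+\<omega>. OS \<omega> + NS \<omega> \<partial>M)" unfolding b[symmetric] by (rule nn_integral_cong) (simp add: split)
    also have "\<dots> = (\<integral>\<^sup>+\<omega>. OS \<omega> \<partial>M) + n" unfolding n_def by (rule nn_integral_add[OF OSm NSm])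
    also have "(\<integral>\<^sup>+\<omega>. OS \<omega> \<partial>M) = ennreal \<rho> * ennreal Ea" unfolding OS_def \<rho>_def a[symmetric] by (rule C2[OF t d])
    finally show ?thesis .
  qed
  have QQtm: "QQ t \<in> borel_measurable M" by (rule QQ_meas[OF t])
  have dsplit: "ennreal Ed = ennreal \<rho> * ennreal Ec + ennreal Ea * n"
  proof -
    have "ennreal Ed = (\<integral>\<^sup>+\<omega>. QQ t \<omega> * OS \<omega> + QQ t \<omega> * NS \<omega> \<partial>M)"
      unfolding dd[symmetric] by (rule nn_integral_cong) (simp add: split distrib_left)
    also have "\<dots> = (\<integral>\<^sup>+\<omega>. QQ t \<omega> * OS \<omega> \<partial>M) + (\<integral>\<^sup>+\<omega>. QQ t \<omega> * NS \<omega> \<partial>M)"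
      by (rule nn_integral_add) (use QQtm OSm NSm in measurable)
    also have "(\<integral>\<^sup>+\<omega>. QQ t \<omega> * OS \<omega> \<partial>M) = ennreal \<rho> * ennreal Ec"
      unfolding OS_def \<rho>_def c[symmetric] by (rule C1[OF t d])
    also have "(\<integral>\<^sup>+\<omega>. QQ t \<omega> * NS \<omega> \<partial>M) = ennreal Ea * n"
    proof -
      have "(\<integral>\<^sup>+\<omega>. QQ t \<omega> * NS \<omega> \<partial>M) = (\<integral>\<^sup>+\<omega>. UU t (Ft t) \<omega> * VV t \<delta> (Ft (t + \<delta>)) \<omega> \<partial>M)"
        unfolding NS_def by (rule E3[OF t d])
      also have "\<dots> = (\<integral>\<^sup>+\<omega>. UU t (Ft t) \<omega> \<partial>M) * (\<integral>\<^sup>+\<omega>. VV t \<delta> (Ft (t + \<delta>)) \<omega> \<partial>M)"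
        by (rule UV_prod[OF t d Ft_meas Ft_meas])
      also have "\<dots> = ennreal Ea * n" unfolding n_def NS_def E1[OF t, symmetric] E2[OF t d, symmetric] a ..
      finally show ?thesis .
    qed
    finally show ?thesis .
  qed
  have "n \<le> ennreal \<rho> * ennreal Ea + n" by (rule add_increasing) simp_all
  then have nle: "n \<le> ennreal Eb" by (simp only: bsplit)
  have nfin: "n \<noteq> \<top>"
  proof
    assume "n = \<top>"
    then show False using nle by (simp add: top_unique)
  qed
  define nr where "nr = enn2real n"
  have nr: "n = ennreal nr" "0 \<le> nr" using nfin by (auto simp: nr_def ennreal_enn2real_if)
  have Ea0: "0 \<le> Ea" unfolding Ea_def by (rule integral_nonneg_AE) (simp add: X0)
  have Eb0: "0 \<le> Eb" unfolding Eb_def by (rule integral_nonneg_AE) (simp add: X0)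
  have Ec0: "0 \<le> Ec" unfolding Ec_def by (rule integral_nonneg_AE) (simp add: X0)
  have Ed0: "0 \<le> Ed" unfolding Ed_def by (rule integral_nonneg_AE) (simp add: X0)
  have r1: "Eb = \<rho> * Ea + nr"
  proof -
    have "ennreal \<rho> * ennreal Ea + ennreal nr = ennreal (\<rho> * Ea + nr)"
      using \<rho>0 Ea0 nr(2) by (simp add: ennreal_mult)
    then have "ennreal Eb = ennreal (\<rho> * Ea + nr)" using bsplit nr(1) by simp
    then show ?thesis using Eb0 \<rho>0 Ea0 nr(2) by (subst (asm) ennreal_inj) auto
  qed
  have r2: "Ed = \<rho> * Ec + Ea * nr"
  proof -
    have "ennreal \<rho> * ennreal Ec + ennreal Ea * ennreal nr = ennreal (\<rho> * Ec + Ea * nr)"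
      using \<rho>0 Ec0 Ea0 nr(2) by (simp add: ennreal_mult)
    then have "ennreal Ed = ennreal (\<rho> * Ec + Ea * nr)" using dsplit nr(1) by simp
    then show ?thesis using Ed0 \<rho>0 Ec0 Ea0 nr(2) by (subst (asm) ennreal_inj) auto
  qed
  have cov: "covariance_of M Xr Yr = Ed - Ea * Eb"
    unfolding covariance_of_def Ed_def Ea_def Eb_def by (rule cov_expand[OF iX iY iXY])
  have var: "variance_of M Xr = Ec - Ea * Ea"
  proof -
    have "variance_of M Xr = (LINT \<omega>|M. (Xr \<omega> - Ea) * (Xr \<omega> - Ea))"
      unfolding variance_of_def Ea_def by (simp add: power2_eq_square)
    also have "\<dots> = Ec - Ea * Ea" unfolding Ec_def Ea_def by (rule cov_expand[OF iX iX iXX])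
    finally show ?thesis .
  qed
  have "covariance_of M Xr Yr = variance_of M Xr * \<rho>"
    unfolding cov var r1 r2 by (simp add: algebra_simps)
  then show ?thesis unfolding Xr_def Yr_def \<rho>_def by (simp add: mult.commute)
qed

end

theorem proposition2:
  fixes M :: "'a measure" and lam :: "real \<Rightarrow> real" and beta :: "real \<Rightarrow> nat pmf"
    and mu t \<delta> :: real and A :: "real \<Rightarrow> 'a \<Rightarrow> nat" and B :: "nat \<Rightarrow> 'a \<Rightarrow> nat"
    and S :: "nat \<Rightarrow> nat \<Rightarrow> 'a \<Rightarrow> real"
  assumes model: "batch_model M lam beta mu A B S"
    and t: "0 \<le> t" and \<delta>: "0 \<le> \<delta>"
    and sq_int_t: "integrable M (\<lambda>\<omega>. (real (queue_length A B S t \<omega>))\<^sup>2)"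
    and sq_int_td: "integrable M (\<lambda>\<omega>. (real (queue_length A B S (t + \<delta>) \<omega>))\<^sup>2)"
  shows "covariance_of M (\<lambda>\<omega>. real (queue_length A B S t \<omega>))
                         (\<lambda>\<omega>. real (queue_length A B S (t + \<delta>) \<omega>))
         = variance_of M (\<lambda>\<omega>. real (queue_length A B S t \<omega>)) * exp (- mu * \<delta>)"
  proof -
  interpret qm M lam beta mu A B S by (rule qm.intro[OF model])
  show ?thesis by (rule final[OF t \<delta> sq_int_t sq_int_td])
qed

end
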